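(* Let $B$ be a complex manifold, let $\mathcal L\to B$ be a BLS field and let $\mathcal H\to B$ be an integrable BLS subfield of $\mathcal L$, with induced connection $\nabla^{\mathcal H}=\mathcal P\nabla^{\mathcal L}$ and curvature $\Theta^{\mathcal H}$. Then $\Theta^{\mathcal H}$ is an operator-valued $(1,1)$-form, i.e. $\Theta^{\mathcal H}_{\sigma\tau}\mathfrak f=0$ and $\Theta^{\mathcal H}_{\bar\sigma\bar\tau}\mathfrak f=0$ for all $(1,0)$-vector fields $\sigma,\tau$ and smooth sections $\mathfrak f$ of $\mathcal H$ on an open set. Moreover, for every open $U\subset B$, all $\mathfrak f,\mathfrak g\in\Gamma(U,\mathscr C^\infty(\mathcal H))$ and all $\sigma,\tau\in\Gamma(U,T^{1,0}_B)$, $$(\Theta^{\mathcal H}_{\sigma\bar\tau}\mathfrak f,\mathfrak g)=(\Theta^{\mathcal L}_{\sigma\bar\tau}\mathfrak f,\mathfrak g)-(\mathcal P^\perp\nabla^{\mathcal L}_\sigma\mathfrak f,\mathcal P^\perp\nabla^{\mathcal L}_\tau\mathfrak g).$$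
   Context: A Hilbert field $\mathcal L\to B$ is a set-theoretic map whose fibers $\mathcal L_b$ are Hilbert spaces with inner products $(\cdot,\cdot)_b$; a section is a map $\mathfrak f$ with $\mathfrak f(b)\in\mathcal L_b$. A smooth structure is a sheaf $\mathscr C^\infty(\mathcal L)$ of sections ($\Gamma(U,\mathscr C^\infty(\mathcal L))$ a $\mathscr C^\infty(U)$-module) such that for each $b$ the values at $b$ of germs in the stalk form a dense subspace of $\mathcal L_b$; the metric is smooth if $b\mapsto(\mathfrak f(b),\mathfrak g(b))_b$ is smooth for smooth local sections. A connection assigns to complex vector fields $\sigma$ and smooth sections $\mathfrak f$ on open $U$ a smooth section $\nabla_\sigma\mathfrak f$, $\mathscr C^\infty$-linear in $\sigma$ and satisfying $\nabla_\sigma(r\mathfrak f)=(\sigma r)\mathfrak f+r\nabla_\sigma\mathfrak f$; it is metric-compatible if $\sigma(\mathfrak f,\mathfrak g)=(\nabla_\sigma\mathfrak f,\mathfrak g)+(\mathfrak f,\nabla_{\bar\sigma}\mathfrak g)$. A smooth Hilbert field has a smooth structure, smooth metric and compatible connection; its curvature is $\Theta_{\sigma\tau}\mathfrak f:=\nabla_\sigma\nabla_\tau\mathfrak f-\nabla_\tau\nabla_\sigma\mathfrak f-\nabla_{[\sigma,\tau]}\mathfrak f$. Now $B$ is a complex manifold. An almost complex structure on a Hilbert field with smooth structure is an operator assigning to $(0,1)$-vector fields $\sigma$ and smooth sections $\mathfrak f$ (on open sets) a smooth section $\bar\partial^{\mathcal L}\mathfrak f(\sigma)$, satisfying $\bar\partial^{\mathcal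 L}(r\mathfrak f)(\sigma)=(\bar\partial r)(\sigma)\mathfrak f+r\,\bar\partial^{\mathcal L}\mathfrak f(\sigma)$; it is integrable if $\bar\partial^{\mathcal L}(\bar\partial^{\mathcal L}\mathfrak f(\tau))(\sigma)-\bar\partial^{\mathcal L}(\bar\partial^{\mathcal L}\mathfrak f(\sigma))(\tau)-\bar\partial^{\mathcal L}\mathfrak f([\sigma,\tau])=0$ for all $(0,1)$-vector fields $\sigma,\tau$ and smooth sections $\mathfrak f$ on open sets. A BLS field is a smooth Hilbert field with an almost complex structure such that $\nabla^{\mathcal L}_\sigma\mathfrak f=\bar\partial^{\mathcal L}\mathfrak f(\sigma)$ for all $(0,1)$-vector fields $\sigma$. A BLS subfield $\mathcal H\subset\mathcal L$ consists of closed subspaces $\mathcal H_b\subset\mathcal L_b$ (restricted inner products) with smooth structure $\mathscr C^\infty(\mathcal H)$ = sheaf of smooth sections of $\mathcal L$ with values in $\mathcal H_b$ for all $b$ (values at $b$ dense in $\mathcal H_b$), such that $\bar\partial^{\mathcal L}\mathfrak f(\sigma)\in\mathscr C^\infty(\mathcal H)$ for $\mathfrak f\in\mathscr C^\infty(\mathcal H)$ (and $\bar\partial^{\mathcal H}:=\bar\partial^{\mathcal L}|_{\mathcal H}$), and such that the fiberwise orthogonal projection $\mathcal P$ onto $\mathcal H$ maps smooth sections of $\mathcal L$ to smooth sections. It is integrable if $\bar\partial^{\mathcal H}$ is integrable. $\mathcal P^\perp:=\mathrm{Id}-\mathcal P$; the induced connection is $\nabla^{\mathcal H}:=\mathcal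 P\nabla^{\mathcal L}$ and $\Theta^{\mathcal H}$ is its curvature. *)

theory Defs
  imports "HOL-Analysis.Analysis"
begin

fun Ck_on :: "nat \<Rightarrow> 'a::real_normed_vector set \<Rightarrow> ('a \<Rightarrow> 'c::real_normed_vector) \<Rightarrow> bool" where
  "Ck_on 0 S f = continuous_on S f"
| "Ck_on (Suc k) S f =
     ((\<forall>x\<in>S. f differentiable (at x)) \<and> (\<forall>v. Ck_on k S (\<lambda>x. frechet_derivative f (at x) v)))"

definition smooth_on :: "'a::real_normed_vector set \<Rightarrow> ('a \<Rightarrow> 'c::real_normed_vector) \<Rightarrow> bool" where
  "smooth_on S f \<longleftrightarrow> (\<forall>k. Ck_on k S f)"

definition cx_holo_map :: "(complex^'n) set \<Rightarrow> (complex^'n \<Rightarrow> complex^'m) \<Rightarrow> bool" where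
  "cx_holo_map S F \<longleftrightarrow>
     (\<forall>x\<in>S. \<exists>D. (F has_derivative D) (at x) \<and> (\<forall>c v. D (c *s v) = c *s D v))"

definition cx_holo_fun :: "(complex^'n) set \<Rightarrow> (complex^'n \<Rightarrow> complex) \<Rightarrow> bool" where
  "cx_holo_fun S h \<longleftrightarrow>
     (\<forall>x\<in>S. \<exists>D. (h has_derivative D) (at x) \<and> (\<forall>c v. D (c *s v) = c * D v))"

definition complex_manifold ::
  "('b::{t2_space,second_countable_topology} set \<times> ('b \<Rightarrow> complex^'n)) set \<Rightarrow> bool" where
  "complex_manifold A \<longleftrightarrow>
     (\<forall>(V,\<phi>)\<in>A. open V \<and> open (\<phi> ` V) \<and> homeomorphism V (\<phi> ` V) \<phi> (inv_into V \<phi>)) \<and>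
     (\<forall>b. \<exists>(V,\<phi>)\<in>A. b \<in> V) \<and>
     (\<forall>(V,\<phi>)\<in>A. \<forall>(W,\<psi>)\<in>A. cx_holo_map (\<phi> ` (V \<inter> W)) (\<psi> \<circ> inv_into V \<phi>))"

definition holo_on :: "('b set \<times> ('b \<Rightarrow> complex^'n)) set \<Rightarrow> 'b set \<Rightarrow> ('b \<Rightarrow> complex) \<Rightarrow> bool" where
  "holo_on A W h \<longleftrightarrow> (\<forall>(V,\<phi>)\<in>A. cx_holo_fun (\<phi> ` (W \<inter> V)) (h \<circ> inv_into V \<phi>))"

text \<open>Smooth complex-valued functions on an open set U; convention: extended by 0 outside U.\<close>
definition smooth_fn :: "('b set \<times> ('b \<Rightarrow> complex^'n)) set \<Rightarrow> 'b set \<Rightarrow> ('b \<Rightarrow> complex) \<Rightarrow> bool" where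
  "smooth_fn A U r \<longleftrightarrow>
     (\<forall>b. b \<notin> U \<longrightarrow> r b = 0) \<and> (\<forall>(V,\<phi>)\<in>A. smooth_on (\<phi> ` (U \<inter> V)) (r \<circ> inv_into V \<phi>))"

section \<open>Complex vector fields (as derivations of the smooth functions on U)\<close>

type_synonym 'b vfield = "('b \<Rightarrow> complex) \<Rightarrow> ('b \<Rightarrow> complex)"

definition vfield :: "('b set \<times> ('b \<Rightarrow> complex^'n)) set \<Rightarrow> 'b set \<Rightarrow> 'b vfield \<Rightarrow> bool" where
  "vfield A U \<sigma> \<longleftrightarrow>
     (\<forall>r. \<not> smooth_fn A U r \<longrightarrow> \<sigma> r = (\<lambda>b. 0)) \<and>
     (\<forall>r. smooth_fn A U r \<longrightarrow> smooth_fn A U (\<sigma> r)) \<and>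
     (\<forall>r s. smooth_fn A U r \<and> smooth_fn A U s \<longrightarrow>
        \<sigma> (\<lambda>b. r b + s b) = (\<lambda>b. \<sigma> r b + \<sigma> s b) \<and>
        \<sigma> (\<lambda>b. r b * s b) = (\<lambda>b. r b * \<sigma> s b + s b * \<sigma> r b)) \<and>
     (\<forall>c r. smooth_fn A U r \<longrightarrow> \<sigma> (\<lambda>b. c * r b) = (\<lambda>b. c * \<sigma> r b))"

text \<open>(1,0)-fields: kill (locally) antiholomorphic functions; (0,1)-fields: kill holomorphic ones.\<close>
definition vf10 :: "('b::topological_space set \<times> ('b \<Rightarrow> complex^'n)) set \<Rightarrow> 'b set \<Rightarrow> 'b vfield \<Rightarrow> bool" where
  "vf10 A U \<sigma> \<longleftrightarrow> vfield A U \<sigma> \<and>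
     (\<forall>r b. smooth_fn A U r \<and> b \<in> U \<and>
        (\<exists>W h. open W \<and> b \<in> W \<and> W \<subseteq> U \<and> holo_on A W h \<and> (\<forall>x\<in>W. r x = cnj (h x)))
        \<longrightarrow> \<sigma> r b = 0)"

definition vf01 :: "('b::topological_space set \<times> ('b \<Rightarrow> complex^'n)) set \<Rightarrow> 'b set \<Rightarrow> 'b vfield \<Rightarrow> bool" where
  "vf01 A U \<sigma> \<longleftrightarrow> vfield A U \<sigma> \<and>
     (\<forall>r b. smooth_fn A U r \<and> b \<in> U \<and>
        (\<exists>W h. open W \<and> b \<in> W \<and> W \<subseteq> U \<and> holo_on A W h \<and> (\<forall>x\<in>W. r x = h x))
        \<longrightarrow> \<sigma> r b = 0)"

definition vconj :: "'b vfield \<Rightarrow> 'b vfield" where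
  "vconj \<sigma> = (\<lambda>r b. cnj (\<sigma> (\<lambda>x. cnj (r x)) b))"

definition vbracket :: "'b vfield \<Rightarrow> 'b vfield \<Rightarrow> 'b vfield" where
  "vbracket \<sigma> \<tau> = (\<lambda>r b. \<sigma> (\<tau> r) b - \<tau> (\<sigma> r) b)"

definition vadd :: "'b vfield \<Rightarrow> 'b vfield \<Rightarrow> 'b vfield" where
  "vadd \<sigma> \<tau> = (\<lambda>r b. \<sigma> r b + \<tau> r b)"

definition vsmul :: "('b \<Rightarrow> complex) \<Rightarrow> 'b vfield \<Rightarrow> 'b vfield" where
  "vsmul r \<sigma> = (\<lambda>s b. r b * \<sigma> s b)"

text \<open>Fibres L b are subsets of an ambient complex vector space 'v (scalar multiplication sc);
  ip b is the inner product on L b (linear in the first, conjugate linear in the second slot).\<close>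

definition fnorm :: "('b \<Rightarrow> 'v \<Rightarrow> 'v \<Rightarrow> complex) \<Rightarrow> 'b \<Rightarrow> 'v \<Rightarrow> real" where
  "fnorm ip b x = sqrt (Re (ip b x x))"

definition hilbert_field ::
  "(complex \<Rightarrow> 'v::ab_group_add \<Rightarrow> 'v) \<Rightarrow> ('b \<Rightarrow> 'v set) \<Rightarrow> ('b \<Rightarrow> 'v \<Rightarrow> 'v \<Rightarrow> complex) \<Rightarrow> bool" where
  "hilbert_field sc L ip \<longleftrightarrow> vector_space sc \<and>
     (\<forall>b. 0 \<in> L b \<and> (\<forall>x\<in>L b. \<forall>y\<in>L b. x + y \<in> L b) \<and> (\<forall>c. \<forall>x\<in>L b. sc c x \<in> L b) \<and>
        (\<forall>x\<in>L b. \<forall>y\<in>L b. \<forall>z\<in>L b. ip b (x + y) z = ip b x z + ip b y z) \<and>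
        (\<forall>c. \<forall>x\<in>L b. \<forall>y\<in>L b. ip b (sc c x) y = c * ip b x y) \<and>
        (\<forall>x\<in>L b. \<forall>y\<in>L b. ip b y x = cnj (ip b x y)) \<and>
        (\<forall>x\<in>L b. x \<noteq> 0 \<longrightarrow> Re (ip b x x) > 0) \<and>
        (\<forall>X. (\<forall>n. X n \<in> L b) \<and> (\<forall>e>0. \<exists>N. \<forall>m\<ge>N. \<forall>n\<ge>N. fnorm ip b (X m - X n) < e)
             \<longrightarrow> (\<exists>x\<in>L b. (\<lambda>n. fnorm ip b (X n - x)) \<longlonglongrightarrow> 0)))"

definition section_on :: "('b \<Rightarrow> 'v::zero set) \<Rightarrow> 'b set \<Rightarrow> ('b \<Rightarrow> 'v) \<Rightarrow> bool" where
  "section_on L U f \<longleftrightarrow> (\<forall>b\<in>U. f b \<in> L b) \<and> (\<forall>b. b \<notin> U \<longrightarrow> f b = 0)"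

definition restr :: "'b set \<Rightarrow> ('b \<Rightarrow> 'v::zero) \<Rightarrow> ('b \<Rightarrow> 'v)" where
  "restr W f = (\<lambda>b. if b \<in> W then f b else 0)"

definition fmult :: "(complex \<Rightarrow> 'v \<Rightarrow> 'v) \<Rightarrow> ('b \<Rightarrow> complex) \<Rightarrow> ('b \<Rightarrow> 'v) \<Rightarrow> ('b \<Rightarrow> 'v)" where
  "fmult sc r f = (\<lambda>b. sc (r b) (f b))"

text \<open>Smooth structure: a sheaf Sm of sections, Sm U a module over the smooth functions on U,
  whose germ values at each point are dense in the fibre.\<close>
definition smooth_structure ::
  "('b::topological_space set \<times> ('b \<Rightarrow> complex^'n)) set \<Rightarrow> (complex \<Rightarrow> 'v::ab_group_add \<Rightarrow> 'v) \<Rightarrow>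
   ('b \<Rightarrow> 'v set) \<Rightarrow> ('b \<Rightarrow> 'v \<Rightarrow> 'v \<Rightarrow> complex) \<Rightarrow> ('b set \<Rightarrow> ('b \<Rightarrow> 'v) set) \<Rightarrow> bool" where
  "smooth_structure A sc L ip Sm \<longleftrightarrow>
     (\<forall>U. open U \<longrightarrow>
        (\<forall>f\<in>Sm U. section_on L U f) \<and> (\<lambda>b. 0) \<in> Sm U \<and>
        (\<forall>f\<in>Sm U. \<forall>g\<in>Sm U. (\<lambda>b. f b + g b) \<in> Sm U) \<and>
        (\<forall>r. \<forall>f\<in>Sm U. smooth_fn A U r \<longrightarrow> fmult sc r f \<in> Sm U)) \<and>
     (\<forall>U W f. open U \<and> open W \<and> W \<subseteq> U \<and> f \<in> Sm U \<longrightarrow> restr W f \<in> Sm W) \<and>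
     (\<forall>U \<U> f. open U \<and> (\<forall>W\<in>\<U>. open W) \<and> \<Union>\<U> = U \<and> section_on L U f \<and>
        (\<forall>W\<in>\<U>. restr W f \<in> Sm W) \<longrightarrow> f \<in> Sm U) \<and>
     (\<forall>b. \<forall>x\<in>L b. \<forall>e>0. \<exists>U f. open U \<and> b \<in> U \<and> f \<in> Sm U \<and> fnorm ip b (x - f b) < e)"

definition smooth_metric ::
  "('b::topological_space set \<times> ('b \<Rightarrow> complex^'n)) set \<Rightarrow> ('b \<Rightarrow> 'v \<Rightarrow> 'v \<Rightarrow> complex) \<Rightarrow>
   ('b set \<Rightarrow> ('b \<Rightarrow> 'v) set) \<Rightarrow> bool" where
  "smooth_metric A ip Sm \<longleftrightarrow>
     (\<forall>U f g. open U \<and> f \<in> Sm U \<and> g \<in> Sm U \<longrightarrow> smooth_fn A U (\<lambda>b. ip b (f b) (g b)))"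

type_synonym ('b,'v) conn = "'b set \<Rightarrow> 'b vfield \<Rightarrow> ('b \<Rightarrow> 'v) \<Rightarrow> ('b \<Rightarrow> 'v)"

definition connection ::
  "('b::topological_space set \<times> ('b \<Rightarrow> complex^'n)) set \<Rightarrow> (complex \<Rightarrow> 'v::ab_group_add \<Rightarrow> 'v) \<Rightarrow>
   ('b set \<Rightarrow> ('b \<Rightarrow> 'v) set) \<Rightarrow> ('b,'v) conn \<Rightarrow> bool" where
  "connection A sc Sm nab \<longleftrightarrow>
     (\<forall>U. open U \<longrightarrow>
        (\<forall>\<sigma>. \<forall>f\<in>Sm U. vfield A U \<sigma> \<longrightarrow> nab U \<sigma> f \<in> Sm U) \<and>
        (\<forall>\<sigma> \<tau>. \<forall>f\<in>Sm U. vfield A U \<sigma> \<and> vfield A U \<tau> \<longrightarrow>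
            nab U (vadd \<sigma> \<tau>) f = (\<lambda>b. nab U \<sigma> f b + nab U \<tau> f b)) \<and>
        (\<forall>r \<sigma>. \<forall>f\<in>Sm U. smooth_fn A U r \<and> vfield A U \<sigma> \<longrightarrow>
            nab U (vsmul r \<sigma>) f = fmult sc r (nab U \<sigma> f)) \<and>
        (\<forall>\<sigma>. \<forall>f\<in>Sm U. \<forall>g\<in>Sm U. vfield A U \<sigma> \<longrightarrow>
            nab U \<sigma> (\<lambda>b. f b + g b) = (\<lambda>b. nab U \<sigma> f b + nab U \<sigma> g b)) \<and>
        (\<forall>\<sigma> r. \<forall>f\<in>Sm U. vfield A U \<sigma> \<and> smooth_fn A U r \<longrightarrow>
            nab U \<sigma> (fmult sc r f) = (\<lambda>b. sc (\<sigma> r b) (f b) + sc (r b) (nab U \<sigma> f b))))"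

definition metric_compatible ::
  "('b::topological_space set \<times> ('b \<Rightarrow> complex^'n)) set \<Rightarrow> ('b \<Rightarrow> 'v \<Rightarrow> 'v \<Rightarrow> complex) \<Rightarrow>
   ('b set \<Rightarrow> ('b \<Rightarrow> 'v) set) \<Rightarrow> ('b,'v) conn \<Rightarrow> bool" where
  "metric_compatible A ip Sm nab \<longleftrightarrow>
     (\<forall>U \<sigma>. \<forall>f\<in>Sm U. \<forall>g\<in>Sm U. open U \<and> vfield A U \<sigma> \<longrightarrow>
        \<sigma> (\<lambda>b. ip b (f b) (g b)) = (\<lambda>b. ip b (nab U \<sigma> f b) (g b) + ip b (f b) (nab U (vconj \<sigma>) g b)))"

definition smooth_hilbert_field ::
  "('b::topological_space set \<times> ('b \<Rightarrow> complex^'n)) set \<Rightarrow> (complex \<Rightarrow> 'v::ab_group_add \<Rightarrow> 'v) \<Rightarrow>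
   ('b \<Rightarrow> 'v set) \<Rightarrow> ('b \<Rightarrow> 'v \<Rightarrow> 'v \<Rightarrow> complex) \<Rightarrow> ('b set \<Rightarrow> ('b \<Rightarrow> 'v) set) \<Rightarrow> ('b,'v) conn \<Rightarrow> bool" where
  "smooth_hilbert_field A sc L ip Sm nab \<longleftrightarrow>
     hilbert_field sc L ip \<and> smooth_structure A sc L ip Sm \<and> smooth_metric A ip Sm \<and>
     connection A sc Sm nab \<and> metric_compatible A ip Sm nab"

definition curv :: "('b,'v::ab_group_add) conn \<Rightarrow> 'b set \<Rightarrow> 'b vfield \<Rightarrow> 'b vfield \<Rightarrow> ('b \<Rightarrow> 'v) \<Rightarrow> ('b \<Rightarrow> 'v)" where
  "curv nab U \<sigma> \<tau> f =
     (\<lambda>b. nab U \<sigma> (nab U \<tau> f) b - nab U \<tau> (nab U \<sigma> f) b - nab U (vbracket \<sigma> \<tau>) f b)"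

text \<open>dbar U sigma f stands for the value of the (0,1)-form dbar f on the (0,1)-field sigma.\<close>
definition almost_cx ::
  "('b::topological_space set \<times> ('b \<Rightarrow> complex^'n)) set \<Rightarrow> (complex \<Rightarrow> 'v::ab_group_add \<Rightarrow> 'v) \<Rightarrow>
   ('b set \<Rightarrow> ('b \<Rightarrow> 'v) set) \<Rightarrow> ('b,'v) conn \<Rightarrow> bool" where
  "almost_cx A sc Sm dbar \<longleftrightarrow>
     (\<forall>U \<sigma>. \<forall>f\<in>Sm U. open U \<and> vf01 A U \<sigma> \<longrightarrow> dbar U \<sigma> f \<in> Sm U) \<and>
     (\<forall>U \<sigma> r. \<forall>f\<in>Sm U. open U \<and> vf01 A U \<sigma> \<and> smooth_fn A U r \<longrightarrow>
        dbar U \<sigma> (fmult sc r f) = (\<lambda>b. sc (\<sigma> r b) (f b) + sc (r b) (dbar U \<sigma> f b)))"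

definition integrable_acs ::
  "('b::topological_space set \<times> ('b \<Rightarrow> complex^'n)) set \<Rightarrow>
   ('b set \<Rightarrow> ('b \<Rightarrow> 'v::ab_group_add) set) \<Rightarrow> ('b,'v) conn \<Rightarrow> bool" where
  "integrable_acs A Sm dbar \<longleftrightarrow>
     (\<forall>U \<sigma> \<tau>. \<forall>f\<in>Sm U. open U \<and> vf01 A U \<sigma> \<and> vf01 A U \<tau> \<longrightarrow>
        (\<lambda>b. dbar U \<sigma> (dbar U \<tau> f) b - dbar U \<tau> (dbar U \<sigma> f) b - dbar U (vbracket \<sigma> \<tau>) f b)
          = (\<lambda>b. 0))"

definition BLS_field ::
  "('b::topological_space set \<times> ('b \<Rightarrow> complex^'n)) set \<Rightarrow> (complex \<Rightarrow> 'v::ab_group_add \<Rightarrow> 'v) \<Rightarrow>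
   ('b \<Rightarrow> 'v set) \<Rightarrow> ('b \<Rightarrow> 'v \<Rightarrow> 'v \<Rightarrow> complex) \<Rightarrow> ('b set \<Rightarrow> ('b \<Rightarrow> 'v) set) \<Rightarrow>
   ('b,'v) conn \<Rightarrow> ('b,'v) conn \<Rightarrow> bool" where
  "BLS_field A sc L ip Sm nab dbar \<longleftrightarrow>
     smooth_hilbert_field A sc L ip Sm nab \<and> almost_cx A sc Sm dbar \<and>
     (\<forall>U \<sigma>. \<forall>f\<in>Sm U. open U \<and> vf01 A U \<sigma> \<longrightarrow> nab U \<sigma> f = dbar U \<sigma> f)"

definition SmSub :: "('b set \<Rightarrow> ('b \<Rightarrow> 'v) set) \<Rightarrow> ('b \<Rightarrow> 'v set) \<Rightarrow> 'b set \<Rightarrow> ('b \<Rightarrow> 'v) set" where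
  "SmSub Sm H U = {f \<in> Sm U. \<forall>b\<in>U. f b \<in> H b}"

definition proj :: "('b \<Rightarrow> 'v \<Rightarrow> 'v \<Rightarrow> complex) \<Rightarrow> ('b \<Rightarrow> 'v::ab_group_add set) \<Rightarrow> 'b \<Rightarrow> 'v \<Rightarrow> 'v" where
  "proj ip H b x = (THE y. y \<in> H b \<and> (\<forall>z\<in>H b. ip b (x - y) z = 0))"

definition proj_perp :: "('b \<Rightarrow> 'v \<Rightarrow> 'v \<Rightarrow> complex) \<Rightarrow> ('b \<Rightarrow> 'v::ab_group_add set) \<Rightarrow> 'b \<Rightarrow> 'v \<Rightarrow> 'v" where
  "proj_perp ip H b x = x - proj ip H b x"

definition BLS_subfield ::
  "('b::topological_space set \<times> ('b \<Rightarrow> complex^'n)) set \<Rightarrow> (complex \<Rightarrow> 'v::ab_group_add \<Rightarrow> 'v) \<Rightarrow>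
   ('b \<Rightarrow> 'v set) \<Rightarrow> ('b \<Rightarrow> 'v \<Rightarrow> 'v \<Rightarrow> complex) \<Rightarrow> ('b set \<Rightarrow> ('b \<Rightarrow> 'v) set) \<Rightarrow>
   ('b,'v) conn \<Rightarrow> ('b \<Rightarrow> 'v set) \<Rightarrow> bool" where
  "BLS_subfield A sc L ip Sm dbar H \<longleftrightarrow>
     (\<forall>b. H b \<subseteq> L b \<and> 0 \<in> H b \<and> (\<forall>x\<in>H b. \<forall>y\<in>H b. x + y \<in> H b) \<and>
        (\<forall>c. \<forall>x\<in>H b. sc c x \<in> H b) \<and>
        (\<forall>X x. (\<forall>n. X n \<in> H b) \<and> x \<in> L b \<and> (\<lambda>n. fnorm ip b (X n - x)) \<longlonglongrightarrow> 0 \<longrightarrow> x \<in> H b)) \<and>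
     (\<forall>b. \<forall>x\<in>H b. \<forall>e>0. \<exists>U f. open U \<and> b \<in> U \<and> f \<in> SmSub Sm H U \<and> fnorm ip b (x - f b) < e) \<and>
     (\<forall>U \<sigma>. \<forall>f\<in>SmSub Sm H U. open U \<and> vf01 A U \<sigma> \<longrightarrow> dbar U \<sigma> f \<in> SmSub Sm H U) \<and>
     (\<forall>U. \<forall>f\<in>Sm U. open U \<longrightarrow> (\<lambda>b. proj ip H b (f b)) \<in> Sm U)"

definition induced_conn :: "('b \<Rightarrow> 'v \<Rightarrow> 'v \<Rightarrow> complex) \<Rightarrow> ('b \<Rightarrow> 'v::ab_group_add set) \<Rightarrow> ('b,'v) conn \<Rightarrow> ('b,'v) conn" where
  "induced_conn ip H nab = (\<lambda>U \<sigma> f b. proj ip H b (nab U \<sigma> f b))"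

end

theory Submission
  imports Defs
begin


locale fibre = vector_space sc
  for sc :: "complex \<Rightarrow> 'v::ab_group_add \<Rightarrow> 'v" +
  fixes Lb :: "'v set" and ipb :: "'v \<Rightarrow> 'v \<Rightarrow> complex" and Hb :: "'v set"
  assumes L0: "0 \<in> Lb" and Ladd: "x\<in>Lb \<Longrightarrow> y\<in>Lb \<Longrightarrow> x+y \<in> Lb"
  and Lsc: "x\<in>Lb \<Longrightarrow> sc c x \<in> Lb"
  and ipadd: "x\<in>Lb \<Longrightarrow> y\<in>Lb \<Longrightarrow> z\<in>Lb \<Longrightarrow> ipb (x+y) z = ipb x z + ipb y z"
  and ipsc: "x\<in>Lb \<Longrightarrow> y\<in>Lb \<Longrightarrow> ipb (sc c x) y = c * ipb x y"
  and ipcnj: "x\<in>Lb \<Longrightarrow> y\<in>Lb \<Longrightarrow> ipb y x = cnj (ipb x y)"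
  and ippos: "x\<in>Lb \<Longrightarrow> x\<noteq>0 \<Longrightarrow> Re (ipb x x) > 0"
  and compl: "(\<forall>n. X n \<in> Lb) \<Longrightarrow>
     (\<forall>e>0. \<exists>N. \<forall>m\<ge>N. \<forall>n\<ge>N. sqrt (Re (ipb (X m - X n) (X m - X n))) < e) \<Longrightarrow>
     \<exists>x\<in>Lb. (\<lambda>n. sqrt (Re (ipb (X n - x) (X n - x)))) \<longlonglongrightarrow> 0"
  and HL: "Hb \<subseteq> Lb" and H0: "0 \<in> Hb" and Hadd: "x\<in>Hb \<Longrightarrow> y\<in>Hb \<Longrightarrow> x+y \<in> Hb"
  and Hsc: "x\<in>Hb \<Longrightarrow> sc c x \<in> Hb"
  and Hcl: "(\<forall>n. X n \<in> Hb) \<Longrightarrow> x \<in> Lb \<Longrightarrow>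
     (\<lambda>n. sqrt (Re (ipb (X n - x) (X n - x)))) \<longlonglongrightarrow> 0 \<Longrightarrow> x \<in> Hb"
begin

lemma neg_sc: "- x = sc (-1) x" by simp

lemma Lneg: "x\<in>Lb \<Longrightarrow> -x \<in> Lb" using Lsc[of x "-1"] by simp
lemma Lsub: "x\<in>Lb \<Longrightarrow> y\<in>Lb \<Longrightarrow> x-y \<in> Lb"
  using Ladd[of x "-y"] Lneg[of y] by simp
lemma Hneg: "x\<in>Hb \<Longrightarrow> -x \<in> Hb" using Hsc[of x "-1"] by simp
lemma Hsub: "x\<in>Hb \<Longrightarrow> y\<in>Hb \<Longrightarrow> x-y \<in> Hb"
  using Hadd[of x "-y"] Hneg[of y] by simp
lemma HLm: "x \<in> Hb \<Longrightarrow> x \<in> Lb" using HL by auto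

lemma ip0l: "z\<in>Lb \<Longrightarrow> ipb 0 z = 0"
  using ipadd[of 0 0 z] L0 by simp
lemma ip0r: "z\<in>Lb \<Longrightarrow> ipb z 0 = 0"
  using ipcnj[of 0 z] ip0l[of z] L0 by simp
lemma ipnegl: "x\<in>Lb \<Longrightarrow> z\<in>Lb \<Longrightarrow> ipb (-x) z = - ipb x z"
  using ipsc[of x z "-1"] by simp
lemma ipsubl: "x\<in>Lb \<Longrightarrow> y\<in>Lb \<Longrightarrow> z\<in>Lb \<Longrightarrow> ipb (x-y) z = ipb x z - ipb y z"
  using ipadd[of x "-y" z] ipnegl[of y z] Lneg[of y] by simp
lemma ipaddr: "x\<in>Lb \<Longrightarrow> y\<in>Lb \<Longrightarrow> z\<in>Lb \<Longrightarrow> ipb z (x+y) = ipb z x + ipb z y"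
  using ipadd[of x y z] ipcnj[of z "x+y"] ipcnj[of z x] ipcnj[of z y] Ladd[of x y] by (metis complex_cnj_add complex_cnj_cnj)
lemma ipsubr: "x\<in>Lb \<Longrightarrow> y\<in>Lb \<Longrightarrow> z\<in>Lb \<Longrightarrow> ipb z (x-y) = ipb z x - ipb z y"
  using ipsubl[of x y z] ipcnj[of z "x-y"] ipcnj[of z x] ipcnj[of z y] Lsub[of x y] by (metis complex_cnj_diff complex_cnj_cnj)
lemma ipscr: "x\<in>Lb \<Longrightarrow> z\<in>Lb \<Longrightarrow> ipb z (sc c x) = cnj c * ipb z x"
  using ipsc[of x z c] ipcnj[of z "sc c x"] ipcnj[of z x] Lsc[of x c] by (metis complex_cnj_mult complex_cnj_cnj)

definition N where "N x = Re (ipb x x)"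

lemma Nnn: "x\<in>Lb \<Longrightarrow> N x \<ge> 0"
  using ippos[of x] ip0l[of 0] L0 unfolding N_def by (cases "x = 0") auto
lemma N0: "x\<in>Lb \<Longrightarrow> N x = 0 \<Longrightarrow> x = 0"
  using ippos[of x] unfolding N_def by force
lemma Im_self: "x\<in>Lb \<Longrightarrow> Im (ipb x x) = 0"
  using ipcnj[of x x] by (metis cnj.simps(2) complex_cnj_cancel_iff equation_minus_iff neg_equal_zero)
lemma Re_sym: "x\<in>Lb \<Longrightarrow> y\<in>Lb \<Longrightarrow> Re (ipb y x) = Re (ipb x y)"
  using ipcnj[of x y] by simp
lemma Nadd: "x\<in>Lb \<Longrightarrow> y\<in>Lb \<Longrightarrow> N (x+y) = N x + N y + 2 * Re (ipb x y)"
  unfolding N_def using ipadd[of x y "x+y"] ipaddr[of x y x] ipaddr[of x y y] Ladd[of x y] Re_sym[of x y]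
  by simp
lemma Nsub: "x\<in>Lb \<Longrightarrow> y\<in>Lb \<Longrightarrow> N (x-y) = N x + N y - 2 * Re (ipb x y)"
  unfolding N_def using ipsubl[of x y "x-y"] ipsubr[of x y x] ipsubr[of x y y] Lsub[of x y] Re_sym[of x y]
  by simp
lemma Nsc: "x\<in>Lb \<Longrightarrow> N (sc (complex_of_real t) x) = t^2 * N x"
  unfolding N_def using ipsc[of x "sc (complex_of_real t) x" t] ipscr[of x x t] Lsc[of x t]
  by (simp add: power2_eq_square)
lemma Re_scr: "x\<in>Lb \<Longrightarrow> z\<in>Lb \<Longrightarrow> Re (ipb z (sc (complex_of_real t) x)) = t * Re (ipb z x)"
  using ipscr[of x z t] by simp

lemma CS: assumes "x\<in>Lb" "y\<in>Lb" shows "(Re (ipb x y))^2 \<le> N x * N y"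
proof (cases "N y = 0")
  case True
  then have "y = 0" using N0 assms by auto
  then show ?thesis using ip0r assms Nnn by simp
next
  case False
  then have pos: "N y > 0" using Nnn assms by (simp add: order_less_le)
  define r where "r = Re (ipb x y)"
  define t where "t = r / N y"
  have "0 \<le> N (x - sc (complex_of_real t) y)" using Nnn Lsub Lsc assms by blast
  also have "\<dots> = N x + t^2 * N y - 2 * t * r"
    using Nsub[of x "sc (complex_of_real t) y"] Nsc[of y t] Re_scr[of y x t] Lsc[of y] assms
    by (simp add: r_def)
  also have "\<dots> = N x - r^2 / N y" using pos by (simp add: t_def field_simps power2_eq_square)
  finally have "r^2 / N y \<le> N x" by simp
  then show ?thesis using pos by (simp add: r_def field_simps)
qed

lemma tri: assumes "x\<in>Lb" "y\<in>Lb" shows "sqrt (N (x+y)) \<le> sqrt (N x) + sqrt (N y)"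
proof -
  have "Re (ipb x y) \<le> sqrt (N x) * sqrt (N y)"
    using CS[OF assms] Nnn assms
    by (metis real_le_rsqrt real_sqrt_mult abs_le_D1 real_sqrt_abs)
  then have "N (x+y) \<le> (sqrt (N x) + sqrt (N y))^2"
    using Nadd[OF assms] Nnn assms by (simp add: power2_eq_square algebra_simps)
  then have "sqrt (N (x+y)) \<le> sqrt ((sqrt (N x) + sqrt (N y))^2)" by (rule real_sqrt_le_mono)
  then show ?thesis using Nnn assms by simp
qed

lemma real_zero_aux: fixes a c :: real
  assumes "c \<ge> 0" "\<And>t. 2*t*a \<le> t^2*c" shows "a = 0"
proof -
  define t where "t = a/(c+1)"
  have cp: "c + 1 > 0" using assms by simp
  have ta: "a = t*(c+1)" using cp by (simp add: t_def)
  have "2*t*a \<le> t^2*c" by (rule assms)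
  then have "2*t*(t*(c+1)) \<le> t^2*c" using ta by simp
  then have "t^2*(c+2) \<le> 0" by (simp add: algebra_simps power2_eq_square)
  moreover have "c + 2 > 0" using assms by simp
  ultimately have "t^2 \<le> 0" by (simp add: mult_le_0_iff)
  then have "t = 0" by simp
  then show ?thesis using ta by simp
qed

lemma orth_from_min:
  assumes x: "x\<in>Lb" and y: "y\<in>Hb" and mn: "\<And>h. h\<in>Hb \<Longrightarrow> N (x - y) \<le> N (x - h)"
    and z: "z\<in>Hb"
  shows "ipb (x - y) z = 0"
proof -
  have yL: "y \<in> Lb" using y HLm by auto
  define w where "w = x - y"
  have wL: "w \<in> Lb" using Lsub x yL w_def by auto
  have re0: "Re (ipb w u) = 0" if u: "u\<in>Hb" for u
  proof -
    have uL: "u \<in> Lb" using u HLm by auto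
    have "2*t*Re (ipb w u) \<le> t^2 * N u" for t
    proof -
      have "y + sc (complex_of_real t) u \<in> Hb" using Hadd Hsc y u by auto
      then have "N w \<le> N (x - (y + sc (complex_of_real t) u))" using mn w_def by auto
      also have "x - (y + sc (complex_of_real t) u) = w - sc (complex_of_real t) u"
        by (simp add: w_def algebra_simps)
      also have "N (w - sc (complex_of_real t) u) = N w + t^2 * N u - 2 * (t * Re (ipb w u))"
        using Nsub[OF wL Lsc[OF uL]] Nsc[OF uL] Re_scr[OF uL wL] by simp
      finally show ?thesis by simp
    qed
    then show ?thesis using real_zero_aux[of "N u" "Re (ipb w u)"] Nnn[OF uL] by auto
  qed
  have zL: "z \<in> Lb" using z HLm by auto
  have "Re (ipb w (sc \<i> z)) = 0" using re0 Hsc z by auto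
  moreover have "Re (ipb w (sc \<i> z)) = Im (ipb w z)" using ipscr[OF zL wL, of \<i>] by simp
  ultimately have "Im (ipb w z) = 0" by simp
  with re0[OF z] show ?thesis by (simp add: w_def complex_eq_iff)
qed

lemma proj_ex:
  assumes x: "x\<in>Lb" shows "\<exists>y\<in>Hb. \<forall>z\<in>Hb. ipb (x - y) z = 0"
proof -
  define D where "D = (\<lambda>h. N (x - h)) ` Hb"
  define d where "d = Inf D"
  have Dne: "D \<noteq> {}" using H0 D_def by auto
  have bdd: "bdd_below D" unfolding D_def bdd_below_def
    using Nnn Lsub x HLm by blast
  have dle: "d \<le> N (x - h)" if "h \<in> Hb" for h
    unfolding d_def D_def using bdd that by (auto simp: D_def intro!: cInf_lower)
  have "\<exists>h. h \<in> Hb \<and> N (x - h) < d + inverse (real (Suc n))" for n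
  proof -
    have "Inf D < d + inverse (real (Suc n))" by (simp add: d_def)
    from cInf_lessD[OF Dne this] show ?thesis by (auto simp: D_def)
  qed
  then have "\<exists>hs. \<forall>n. hs n \<in> Hb \<and> N (x - hs n) < d + inverse (real (Suc n))"
    by (rule choice[OF allI])
  then obtain hs where hs': "\<forall>n. hs n \<in> Hb \<and> N (x - hs n) < d + inverse (real (Suc n))"
    by blast
  have hs: "\<And>n. hs n \<in> Hb" "\<And>n. N (x - hs n) < d + inverse (real (Suc n))" using hs' by auto
  have hsL: "hs n \<in> Lb" for n using hs HLm by auto
  have par: "N (hs n - hs m) \<le> 2 * inverse (real (Suc m)) + 2 * inverse (real (Suc n))" for m n
  proof -
    define a where "a = x - hs m"
    define c where "c = x - hs n"
    define mid where "mid = sc (1/2) (hs m + hs n)"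
    have midH: "mid \<in> Hb" using mid_def Hsc Hadd hs by auto
    have aL: "a \<in> Lb" and cL: "c \<in> Lb" using a_def c_def Lsub x hsL by auto
    have midL: "mid \<in> Lb" using midH HLm by auto
    have e1: "a + c = sc (complex_of_real 2) (x - mid)"
    proof -
      have "sc (complex_of_real 2) (x - mid) = sc 2 x - sc (2 * (1/2)) (hs m + hs n)"
        by (simp add: mid_def scale_right_diff_distrib)
      also have "sc 2 x = x + x" using scale_left_distrib[of 1 1 x] by simp
      finally show ?thesis by (simp add: a_def c_def algebra_simps)
    qed
    have "N (a + c) = 4 * N (x - mid)" using e1 Nsc[of "x - mid" 2] Lsub[OF x midL] by simp
    moreover have "N (x - mid) \<ge> d" using dle midH by auto
    moreover have "N (a - c) + N (a + c) = 2 * N a + 2 * N c"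
      using Nadd[OF aL cL] Nsub[OF aL cL] by simp
    moreover have "N (hs n - hs m) = N (a - c)" by (simp add: a_def c_def)
    moreover have "N a < d + inverse (real (Suc m))" using hs a_def by auto
    moreover have "N c < d + inverse (real (Suc n))" using hs c_def by auto
    ultimately show ?thesis by linarith
  qed
  have cauchy: "\<forall>e>0. \<exists>M. \<forall>m\<ge>M. \<forall>n\<ge>M. sqrt (Re (ipb (hs m - hs n) (hs m - hs n))) < e"
  proof (intro allI impI)
    fix e :: real assume e: "e > 0"
    obtain M where M: "inverse (real (Suc M)) < e^2/4" using reals_Archimedean[of "e^2/4"] e by auto
    show "\<exists>M. \<forall>m\<ge>M. \<forall>n\<ge>M. sqrt (Re (ipb (hs m - hs n) (hs m - hs n))) < e"
    proof (intro exI allI impI)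
      fix m n assume mn: "M \<le> m" "M \<le> n"
      have "inverse (real (Suc m)) \<le> inverse (real (Suc M))" using mn by (simp add: le_imp_inverse_le)
      moreover have "inverse (real (Suc n)) \<le> inverse (real (Suc M))" using mn by (simp add: le_imp_inverse_le)
      ultimately have "N (hs m - hs n) < e^2" using par[of m n] M by linarith
      then have "sqrt (N (hs m - hs n)) < sqrt (e^2)" by (rule real_sqrt_less_mono)
      then show "sqrt (Re (ipb (hs m - hs n) (hs m - hs n))) < e" using e by (simp add: N_def)
    qed
  qed
  obtain y where yL: "y \<in> Lb" and lim: "(\<lambda>n. sqrt (Re (ipb (hs n - y) (hs n - y)))) \<longlonglongrightarrow> 0"
    using compl[of hs] hsL cauchy by blast
  have yH: "y \<in> Hb" using Hcl[of hs y] hs yL lim by auto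
  have bnd: "sqrt (N (x - y)) \<le> sqrt (d + inverse (real (Suc n))) + sqrt (Re (ipb (hs n - y) (hs n - y)))" for n
  proof -
    have "x - y = (x - hs n) + (hs n - y)" by simp
    moreover have "sqrt (N ((x - hs n) + (hs n - y))) \<le> sqrt (N (x - hs n)) + sqrt (N (hs n - y))"
      by (rule tri) (use Lsub x hsL yL in auto)
    ultimately have "sqrt (N (x - y)) \<le> sqrt (N (x - hs n)) + sqrt (N (hs n - y))" by simp
    moreover have "sqrt (N (x - hs n)) \<le> sqrt (d + inverse (real (Suc n)))"
      using hs(2)[of n] by (simp add: real_sqrt_le_mono less_imp_le)
    ultimately have "sqrt (N (x - y)) \<le> sqrt (d + inverse (real (Suc n))) + sqrt (N (hs n - y))"
      by linarith
    then show ?thesis by (simp only: N_def)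
  qed
  have "(\<lambda>n. sqrt (d + inverse (real (Suc n))) + sqrt (Re (ipb (hs n - y) (hs n - y)))) \<longlonglongrightarrow> sqrt d + 0"
    by (intro tendsto_add tendsto_real_sqrt LIMSEQ_inverse_real_of_nat_add lim)
  then have "sqrt (N (x - y)) \<le> sqrt d + 0"
    using bnd by (intro LIMSEQ_le_const) auto
  then have "N (x - y) \<le> d" by simp
  then have mn: "\<And>h. h\<in>Hb \<Longrightarrow> N (x - y) \<le> N (x - h)" using dle by force
  show ?thesis using orth_from_min[OF x yH mn] yH by blast
qed

definition P where "P x = (THE y. y \<in> Hb \<and> (\<forall>z\<in>Hb. ipb (x - y) z = 0))"

lemma proj_uniq:
  assumes x: "x \<in> Lb" and "y\<in>Hb" "\<forall>z\<in>Hb. ipb (x - y) z = 0" "y'\<in>Hb" "\<forall>z\<in>Hb. ipb (x - y') z = 0"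
  shows "y = y'"
proof -
  have yL: "y \<in> Lb" "y' \<in> Lb" using assms HLm by auto
  have dH: "y' - y \<in> Hb" using Hsub assms by auto
  have dL: "y' - y \<in> Lb" using dH HLm by auto
  have "ipb (x - y) (y' - y) - ipb (x - y') (y' - y) = 0" using assms dH by auto
  moreover have "ipb (x - y) (y' - y) - ipb (x - y') (y' - y) = ipb ((x - y) - (x - y')) (y' - y)"
    using ipsubl[of "x - y" "x - y'" "y' - y"] Lsub x yL dL by auto
  moreover have "(x - y) - (x - y') = y' - y" by simp
  ultimately have "ipb (y' - y) (y' - y) = 0" by simp
  then have "N (y' - y) = 0" by (simp add: N_def)
  then have "y' - y = 0" using N0[OF dL] by auto
  then show ?thesis by simp
qed

lemma P_prop: assumes "x \<in> Lb" shows "P x \<in> Hb" "\<forall>z\<in>Hb. ipb (x - P x) z = 0"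
proof -
  have "\<exists>!y. y \<in> Hb \<and> (\<forall>z\<in>Hb. ipb (x - y) z = 0)"
    using proj_ex[OF assms] proj_uniq[OF assms] by blast
  from theI'[OF this] show "P x \<in> Hb" "\<forall>z\<in>Hb. ipb (x - P x) z = 0" unfolding P_def by auto
qed

lemma P_id: assumes "x \<in> Hb" shows "P x = x"
proof -
  have xL: "x \<in> Lb" using assms HLm by auto
  show ?thesis using proj_uniq[OF xL P_prop[OF xL]] assms ip0l HLm by auto
qed

lemma PL: "x \<in> Lb \<Longrightarrow> P x \<in> Lb" using P_prop HLm by auto

lemma ip_P_left: assumes "x \<in> Lb" "z \<in> Hb" shows "ipb (P x) z = ipb x z"
proof -
  have "ipb (x - P x) z = 0" using P_prop assms by auto
  then show ?thesis using ipsubl[of x "P x" z] assms PL HLm by auto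
qed

lemma ip_P_right: assumes "x \<in> Hb" "y \<in> Lb" shows "ipb x (P y) = ipb x y"
proof -
  have xL: "x \<in> Lb" using assms HLm by auto
  have "ipb x (P y) = cnj (ipb (P y) x)" using ipcnj[of "P y" x] PL assms xL by auto
  also have "\<dots> = cnj (ipb y x)" using ip_P_left assms by simp
  also have "\<dots> = ipb x y" using ipcnj[of y x] assms xL by simp
  finally show ?thesis .
qed

lemma ip_perp: assumes "x \<in> Lb" "v \<in> Lb" shows "ipb (x - P x) v = ipb (x - P x) (v - P v)"
proof -
  have "ipb (x - P x) (P v) = 0" using P_prop assms by auto
  then show ?thesis using ipsubr[of v "P v" "x - P x"] assms PL Lsub by auto
qed

end



lemma FD_eq: "(f has_derivative D) (at x) \<Longrightarrow> frechet_derivative f (at x) = D"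
  using frechet_derivative_at by metis

lemma Ck_Suc_down: "Ck_on (Suc k) S f \<Longrightarrow> Ck_on k S f"
proof (induction k arbitrary: f)
  case 0
  then show ?case
    by (auto intro!: continuous_at_imp_continuous_on differentiable_imp_continuous_within)
next
  case (Suc k)
  then show ?case by auto
qed

lemma Ck_cong: "open S \<Longrightarrow> Ck_on k S f \<Longrightarrow> (\<And>x. x\<in>S \<Longrightarrow> f x = g x) \<Longrightarrow> Ck_on k S g"
proof (induction k arbitrary: f g)
  case 0
  then show ?case using continuous_on_cong by force
next
  case (Suc k)
  have hd: "(g has_derivative frechet_derivative f (at x)) (at x)" if "x\<in>S" for x
    using has_derivative_transform_within_open[of f _ x UNIV S g] Suc.prems that
    by (auto simp: frechet_derivative_works)
  have "g differentiable (at x)" if "x\<in>S" for x using hd[OF that] by (auto simp: differentiable_def)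
  moreover have "Ck_on k S (\<lambda>x. frechet_derivative g (at x) v)" for v
    using Suc.IH[of "\<lambda>x. frechet_derivative f (at x) v"] Suc.prems FD_eq[OF hd] by auto
  ultimately show ?case by simp
qed

lemma Ck_const: "Ck_on k S (\<lambda>_. c)"
proof (induction k arbitrary: c)
  case 0 then show ?case by simp
next
  case (Suc k)
  have "frechet_derivative (\<lambda>_. c) (at x) = (\<lambda>_. 0)" for x by (rule FD_eq) simp
  then show ?case using Suc by simp
qed

lemma Ck_add: fixes f g :: "'a::real_normed_vector \<Rightarrow> 'c::real_normed_vector"
  shows "open S \<Longrightarrow> Ck_on k S f \<Longrightarrow> Ck_on k S g \<Longrightarrow> Ck_on k S (\<lambda>x. f x + g x)"
proof (induction k arbitrary: f g)
  case 0 then show ?case by (simp add: continuous_on_add)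
next
  case (Suc k)
  have e: "frechet_derivative (\<lambda>x. f x + g x) (at x) v = frechet_derivative f (at x) v + frechet_derivative g (at x) v"
    if "x\<in>S" for x v
  proof -
    have df: "(f has_derivative frechet_derivative f (at x)) (at x)"
      by (rule frechet_derivative_works[THEN iffD1]) (use Suc.prems that in auto)
    have dg: "(g has_derivative frechet_derivative g (at x)) (at x)"
      by (rule frechet_derivative_works[THEN iffD1]) (use Suc.prems that in auto)
    show ?thesis using FD_eq[OF has_derivative_add[OF df dg]] by simp
  qed
  have "Ck_on k S (\<lambda>x. frechet_derivative (\<lambda>x. f x + g x) (at x) v)" for v
  proof (rule Ck_cong[OF \<open>open S\<close>])
    show "Ck_on k S (\<lambda>x. frechet_derivative f (at x) v + frechet_derivative g (at x) v)"
      using Suc.prems by (intro Suc.IH) auto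
  qed (use e in auto)
  moreover have "\<forall>x\<in>S. (\<lambda>x. f x + g x) differentiable (at x)"
    using Suc.prems by (auto intro: differentiable_add)
  ultimately show ?case by simp
qed

lemma Ck_mult: fixes f g :: "'a::real_normed_vector \<Rightarrow> complex"
  shows "open S \<Longrightarrow> Ck_on k S f \<Longrightarrow> Ck_on k S g \<Longrightarrow> Ck_on k S (\<lambda>x. f x * g x)"
proof (induction k arbitrary: f g)
  case 0 then show ?case by (simp add: continuous_on_mult)
next
  case (Suc k)
  have e: "frechet_derivative (\<lambda>x. f x * g x) (at x) v = f x * frechet_derivative g (at x) v + frechet_derivative f (at x) v * g x"
    if "x\<in>S" for x v
  proof -
    have df: "(f has_derivative frechet_derivative f (at x)) (at x)"
      by (rule frechet_derivative_works[THEN iffD1]) (use Suc.prems that in auto)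
    have dg: "(g has_derivative frechet_derivative g (at x)) (at x)"
      by (rule frechet_derivative_works[THEN iffD1]) (use Suc.prems that in auto)
    show ?thesis using FD_eq[OF has_derivative_mult[OF df dg]] by simp
  qed
  have "Ck_on k S (\<lambda>x. frechet_derivative (\<lambda>x. f x * g x) (at x) v)" for v
  proof (rule Ck_cong[OF \<open>open S\<close>])
    have "Ck_on k S f" "Ck_on k S g" using Suc.prems Ck_Suc_down by blast+
    then show "Ck_on k S (\<lambda>x. f x * frechet_derivative g (at x) v + frechet_derivative f (at x) v * g x)"
      using Suc.prems by (intro Ck_add Suc.IH) auto
  qed (use e in auto)
  moreover have "\<forall>x\<in>S. (\<lambda>x. f x * g x) differentiable (at x)"
    using Suc.prems by (auto intro: differentiable_mult)
  ultimately show ?case by simp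
qed

lemma Ck_cnj: fixes f :: "'a::real_normed_vector \<Rightarrow> complex"
  shows "open S \<Longrightarrow> Ck_on k S f \<Longrightarrow> Ck_on k S (\<lambda>x. cnj (f x))"
proof (induction k arbitrary: f)
  case 0 then show ?case by (simp add: continuous_on_cnj)
next
  case (Suc k)
  have e: "frechet_derivative (\<lambda>x. cnj (f x)) (at x) v = cnj (frechet_derivative f (at x) v)"
    if "x\<in>S" for x v
  proof -
    have df: "(f has_derivative frechet_derivative f (at x)) (at x)"
      by (rule frechet_derivative_works[THEN iffD1]) (use Suc.prems that in auto)
    show ?thesis using FD_eq[OF has_derivative_cnj[OF df]] by simp
  qed
  have "Ck_on k S (\<lambda>x. frechet_derivative (\<lambda>x. cnj (f x)) (at x) v)" for v
  proof (rule Ck_cong[OF \<open>open S\<close>])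
    show "Ck_on k S (\<lambda>x. cnj (frechet_derivative f (at x) v))"
      using Suc.prems by (intro Suc.IH) auto
  qed (use e in auto)
  moreover have "\<forall>x\<in>S. (\<lambda>x. cnj (f x)) differentiable (at x)"
    using Suc.prems by (auto simp: differentiable_cnj_iff)
  ultimately show ?case by simp
qed

lemma Ck_diff: fixes f g :: "'a::real_normed_vector \<Rightarrow> complex"
  shows "open S \<Longrightarrow> Ck_on k S f \<Longrightarrow> Ck_on k S g \<Longrightarrow> Ck_on k S (\<lambda>x. f x - g x)"
proof -
  assume a: "open S" "Ck_on k S f" "Ck_on k S g"
  have "Ck_on k S (\<lambda>x. f x + (-1) * g x)"
    using a by (intro Ck_add Ck_mult Ck_const) auto
  then show ?thesis by simp
qed

lemma smooth_on_mult: "open S \<Longrightarrow> smooth_on S f \<Longrightarrow> smooth_on S g \<Longrightarrow> smooth_on S (\<lambda>x. f x * (g x::complex))"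
  unfolding smooth_on_def using Ck_mult by blast
lemma smooth_on_add: "open S \<Longrightarrow> smooth_on S f \<Longrightarrow> smooth_on S g \<Longrightarrow> smooth_on S (\<lambda>x. f x + (g x::complex))"
  unfolding smooth_on_def using Ck_add by blast
lemma smooth_on_diff: "open S \<Longrightarrow> smooth_on S f \<Longrightarrow> smooth_on S g \<Longrightarrow> smooth_on S (\<lambda>x. f x - (g x::complex))"
  unfolding smooth_on_def using Ck_diff by blast
lemma smooth_on_cnj: "open S \<Longrightarrow> smooth_on S f \<Longrightarrow> smooth_on S (\<lambda>x. cnj (f x::complex))"
  unfolding smooth_on_def using Ck_cnj by blast

lemma chart_open:
  assumes "complex_manifold A" "(V,\<phi>) \<in> A" "open U"
  shows "open (\<phi> ` (U \<inter> V))"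
proof -
  have h: "open V" "open (\<phi> ` V)" "homeomorphism V (\<phi> ` V) \<phi> (inv_into V \<phi>)"
    using assms unfolding complex_manifold_def by fast+
  have "openin (top_of_set (\<phi> ` V)) (\<phi> ` (U \<inter> V))"
    by (rule homeomorphism_imp_open_map[OF h(3)]) (use assms in \<open>auto simp: openin_open intro!: exI[of _ U]\<close>)
  then show ?thesis using h(2) openin_open_trans by blast
qed

lemma smooth_fn_mult:
  assumes "complex_manifold A" "open U" "smooth_fn A U r" "smooth_fn A U s"
  shows "smooth_fn A U (\<lambda>b. r b * s b)"
  unfolding smooth_fn_def
proof (intro conjI allI impI ballI)
  show "b \<notin> U \<Longrightarrow> r b * s b = 0" for b using assms unfolding smooth_fn_def by auto
  fix p assume p: "p \<in> A"
  obtain V \<phi> where p': "p = (V,\<phi>)" by fastforce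
  have "smooth_on (\<phi> ` (U \<inter> V)) (\<lambda>x. (r \<circ> inv_into V \<phi>) x * (s \<circ> inv_into V \<phi>) x)"
  proof -
    have hr: "smooth_on (\<phi> ` (U \<inter> V)) (r \<circ> inv_into V \<phi>)"
      using assms(3) p p' unfolding smooth_fn_def by fastforce
    have hs: "smooth_on (\<phi> ` (U \<inter> V)) (s \<circ> inv_into V \<phi>)"
      using assms(4) p p' unfolding smooth_fn_def by fastforce
    show ?thesis by (rule smooth_on_mult[OF chart_open[of A V \<phi> U] hr hs]) (use assms p p' in auto)
  qed
  then show "case p of (V, \<phi>) \<Rightarrow> smooth_on (\<phi> ` (U \<inter> V)) ((\<lambda>b. r b * s b) \<circ> inv_into V \<phi>)"
    using p' by (simp add: o_def)
qed

lemma smooth_fn_add: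
  assumes "complex_manifold A" "open U" "smooth_fn A U r" "smooth_fn A U s"
  shows "smooth_fn A U (\<lambda>b. r b + s b)"
  unfolding smooth_fn_def
proof (intro conjI allI impI ballI)
  show "b \<notin> U \<Longrightarrow> r b + s b = 0" for b using assms unfolding smooth_fn_def by auto
  fix p assume p: "p \<in> A"
  obtain V \<phi> where p': "p = (V,\<phi>)" by fastforce
  have "smooth_on (\<phi> ` (U \<inter> V)) (\<lambda>x. (r \<circ> inv_into V \<phi>) x + (s \<circ> inv_into V \<phi>) x)"
  proof -
    have hr: "smooth_on (\<phi> ` (U \<inter> V)) (r \<circ> inv_into V \<phi>)"
      using assms(3) p p' unfolding smooth_fn_def by fastforce
    have hs: "smooth_on (\<phi> ` (U \<inter> V)) (s \<circ> inv_into V \<phi>)"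
      using assms(4) p p' unfolding smooth_fn_def by fastforce
    show ?thesis by (rule smooth_on_add[OF chart_open[of A V \<phi> U] hr hs]) (use assms p p' in auto)
  qed
  then show "case p of (V, \<phi>) \<Rightarrow> smooth_on (\<phi> ` (U \<inter> V)) ((\<lambda>b. r b + s b) \<circ> inv_into V \<phi>)"
    using p' by (simp add: o_def)
qed

lemma smooth_fn_diff:
  assumes "complex_manifold A" "open U" "smooth_fn A U r" "smooth_fn A U s"
  shows "smooth_fn A U (\<lambda>b. r b - s b)"
  unfolding smooth_fn_def
proof (intro conjI allI impI ballI)
  show "b \<notin> U \<Longrightarrow> r b - s b = 0" for b using assms unfolding smooth_fn_def by auto
  fix p assume p: "p \<in> A"
  obtain V \<phi> where p': "p = (V,\<phi>)" by fastforce
  have "smooth_on (\<phi> ` (U \<inter> V)) (\<lambda>x. (r \<circ> inv_into V \<phi>) x - (s \<circ> inv_into V \<phi>) x)"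
  proof -
    have hr: "smooth_on (\<phi> ` (U \<inter> V)) (r \<circ> inv_into V \<phi>)"
      using assms(3) p p' unfolding smooth_fn_def by fastforce
    have hs: "smooth_on (\<phi> ` (U \<inter> V)) (s \<circ> inv_into V \<phi>)"
      using assms(4) p p' unfolding smooth_fn_def by fastforce
    show ?thesis by (rule smooth_on_diff[OF chart_open[of A V \<phi> U] hr hs]) (use assms p p' in auto)
  qed
  then show "case p of (V, \<phi>) \<Rightarrow> smooth_on (\<phi> ` (U \<inter> V)) ((\<lambda>b. r b - s b) \<circ> inv_into V \<phi>)"
    using p' by (simp add: o_def)
qed

lemma smooth_fn_cnj:
  assumes "complex_manifold A" "open U" "smooth_fn A U r"
  shows "smooth_fn A U (\<lambda>b. cnj (r b))"
  unfolding smooth_fn_def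
proof (intro conjI allI impI ballI)
  show "b \<notin> U \<Longrightarrow> cnj (r b) = 0" for b using assms unfolding smooth_fn_def by auto
  fix p assume p: "p \<in> A"
  obtain V \<phi> where p': "p = (V,\<phi>)" by fastforce
  have "smooth_on (\<phi> ` (U \<inter> V)) (\<lambda>x. cnj ((r \<circ> inv_into V \<phi>) x))"
  proof -
    have hr: "smooth_on (\<phi> ` (U \<inter> V)) (r \<circ> inv_into V \<phi>)"
      using assms(3) p p' unfolding smooth_fn_def by fastforce
    show ?thesis by (rule smooth_on_cnj[OF chart_open[of A V \<phi> U] hr]) (use assms p p' in auto)
  qed
  then show "case p of (V, \<phi>) \<Rightarrow> smooth_on (\<phi> ` (U \<inter> V)) ((\<lambda>b. cnj (r b)) \<circ> inv_into V \<phi>)"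
    using p' by (simp add: o_def)
qed

lemma smooth_fn_cnj_iff:
  assumes "complex_manifold A" "open U"
  shows "smooth_fn A U (\<lambda>b. cnj (r b)) \<longleftrightarrow> smooth_fn A U r"
  using smooth_fn_cnj[OF assms, of r] smooth_fn_cnj[OF assms, of "\<lambda>b. cnj (r b)"] by auto




lemma vf_zero: assumes "vfield A U \<sigma>" shows "\<sigma> (\<lambda>b. 0) = (\<lambda>b. 0)"
proof (cases "smooth_fn A U (\<lambda>b. 0)")
  case True
  then have "\<sigma> (\<lambda>b. 0 * (0::complex)) = (\<lambda>b. 0 * \<sigma> (\<lambda>b. 0) b)"
    using assms unfolding vfield_def by blast
  then show ?thesis by simp
next
  case False
  then show ?thesis using assms unfolding vfield_def by blast
qed

lemma vf_add: "vfield A U \<sigma> \<Longrightarrow> smooth_fn A U r \<Longrightarrow> smooth_fn A U s \<Longrightarrow>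
   \<sigma> (\<lambda>b. r b + s b) = (\<lambda>b. \<sigma> r b + \<sigma> s b)"
  unfolding vfield_def by blast
lemma vf_mult: "vfield A U \<sigma> \<Longrightarrow> smooth_fn A U r \<Longrightarrow> smooth_fn A U s \<Longrightarrow>
   \<sigma> (\<lambda>b. r b * s b) = (\<lambda>b. r b * \<sigma> s b + s b * \<sigma> r b)"
  unfolding vfield_def by blast
lemma vf_smul: "vfield A U \<sigma> \<Longrightarrow> smooth_fn A U r \<Longrightarrow> \<sigma> (\<lambda>b. c * r b) = (\<lambda>b. c * \<sigma> r b)"
  unfolding vfield_def by blast
lemma vf_smooth: "vfield A U \<sigma> \<Longrightarrow> smooth_fn A U r \<Longrightarrow> smooth_fn A U (\<sigma> r)"
  unfolding vfield_def by blast
lemma vf_nonsmooth: "vfield A U \<sigma> \<Longrightarrow> \<not> smooth_fn A U r \<Longrightarrow> \<sigma> r = (\<lambda>b. 0)"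
  unfolding vfield_def by blast

lemma vconj_vconj: "vconj (vconj \<tau>) = \<tau>"
  unfolding vconj_def by simp

lemma vconj_bracket: "vconj (vbracket \<sigma> \<tau>) = vbracket (vconj \<sigma>) (vconj \<tau>)"
  unfolding vconj_def vbracket_def by simp

lemma vconj_vfield:
  assumes M: "complex_manifold A" "open U" and v: "vfield A U \<sigma>"
  shows "vfield A U (vconj \<sigma>)"
  unfolding vfield_def
proof (intro conjI allI impI)
  fix r assume "\<not> smooth_fn A U r"
  then have "\<not> smooth_fn A U (\<lambda>x. cnj (r x))" using smooth_fn_cnj_iff[OF M] by auto
  then show "vconj \<sigma> r = (\<lambda>b. 0)" using vf_nonsmooth[OF v] unfolding vconj_def by simp
next
  fix r assume r: "smooth_fn A U r"
  then have "smooth_fn A U (\<sigma> (\<lambda>x. cnj (r x)))" using smooth_fn_cnj_iff[OF M] vf_smooth[OF v] by auto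
  then show "smooth_fn A U (vconj \<sigma> r)" unfolding vconj_def using smooth_fn_cnj[OF M] by auto
next
  fix r s assume rs: "smooth_fn A U r \<and> smooth_fn A U s"
  then have cr: "smooth_fn A U (\<lambda>x. cnj (r x))" and cs: "smooth_fn A U (\<lambda>x. cnj (s x))"
    using smooth_fn_cnj_iff[OF M] by auto
  have "(\<lambda>x. cnj (r x + s x)) = (\<lambda>x. cnj (r x) + cnj (s x))" by simp
  then show "vconj \<sigma> (\<lambda>b. r b + s b) = (\<lambda>b. vconj \<sigma> r b + vconj \<sigma> s b)"
    unfolding vconj_def using vf_add[OF v cr cs] by simp
  have "(\<lambda>x. cnj (r x * s x)) = (\<lambda>x. cnj (r x) * cnj (s x))" by simp
  then show "vconj \<sigma> (\<lambda>b. r b * s b) = (\<lambda>b. r b * vconj \<sigma> s b + s b * vconj \<sigma> r b)"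
    unfolding vconj_def using vf_mult[OF v cr cs] by simp
next
  fix c r assume r: "smooth_fn A U r"
  then have cr: "smooth_fn A U (\<lambda>x. cnj (r x))" using smooth_fn_cnj_iff[OF M] by auto
  have "(\<lambda>x. cnj (c * r x)) = (\<lambda>x. cnj c * cnj (r x))" by simp
  then show "vconj \<sigma> (\<lambda>b. c * r b) = (\<lambda>b. c * vconj \<sigma> r b)"
    unfolding vconj_def using vf_smul[OF v cr, of "cnj c"] by simp
qed

lemma vconj_vf01:
  assumes M: "complex_manifold A" "open U" and v: "vf10 A U \<sigma>"
  shows "vf01 A U (vconj \<sigma>)"
proof -
  have vf: "vfield A U \<sigma>" using v unfolding vf10_def by auto
  show ?thesis unfolding vf01_def
  proof (intro conjI allI impI)
    show "vfield A U (vconj \<sigma>)" by (rule vconj_vfield[OF M vf])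
  next
    fix r b assume a: "smooth_fn A U r \<and> b \<in> U \<and>
        (\<exists>W h. open W \<and> b \<in> W \<and> W \<subseteq> U \<and> holo_on A W h \<and> (\<forall>x\<in>W. r x = h x))"
    then obtain W h where W: "open W" "b \<in> W" "W \<subseteq> U" "holo_on A W h" "\<forall>x\<in>W. r x = h x" by blast
    have cr: "smooth_fn A U (\<lambda>x. cnj (r x))" using a smooth_fn_cnj_iff[OF M] by auto
    have cl: "\<And>r b. smooth_fn A U r \<Longrightarrow> b \<in> U \<Longrightarrow>
        (\<exists>W h. open W \<and> b \<in> W \<and> W \<subseteq> U \<and> holo_on A W h \<and> (\<forall>x\<in>W. r x = cnj (h x)))
        \<Longrightarrow> \<sigma> r b = 0" using v unfolding vf10_def by blast
    have "\<sigma> (\<lambda>x. cnj (r x)) b = 0"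
      apply (rule cl[OF cr])
      using a apply blast
      using W by auto
    then show "vconj \<sigma> r b = 0" unfolding vconj_def by simp
  qed
qed

lemma bracket_vfield:
  assumes M: "complex_manifold A" "open U" and s: "vfield A U \<sigma>" and t: "vfield A U \<tau>"
  shows "vfield A U (vbracket \<sigma> \<tau>)"
  unfolding vfield_def
proof (intro conjI allI impI)
  fix r assume "\<not> smooth_fn A U r"
  then show "vbracket \<sigma> \<tau> r = (\<lambda>b. 0)"
    unfolding vbracket_def using vf_nonsmooth[OF s] vf_nonsmooth[OF t] vf_zero[OF s] vf_zero[OF t] by simp
next
  fix r assume r: "smooth_fn A U r"
  then show "smooth_fn A U (vbracket \<sigma> \<tau> r)" unfolding vbracket_def
    using smooth_fn_diff[OF M] vf_smooth[OF s] vf_smooth[OF t] by auto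
next
  fix r s' assume rs: "smooth_fn A U r \<and> smooth_fn A U s'"
  then have r: "smooth_fn A U r" and s': "smooth_fn A U s'" by auto
  have tr: "smooth_fn A U (\<tau> r)" and ts: "smooth_fn A U (\<tau> s')"
    and sr: "smooth_fn A U (\<sigma> r)" and ss: "smooth_fn A U (\<sigma> s')"
    using vf_smooth s t r s' by auto
  have e3: "\<sigma> (\<tau> (\<lambda>b. r b + s' b)) = (\<lambda>b. \<sigma> (\<tau> r) b + \<sigma> (\<tau> s') b)"
    using vf_add[OF t r s'] vf_add[OF s tr ts] by simp
  have e4: "\<tau> (\<sigma> (\<lambda>b. r b + s' b)) = (\<lambda>b. \<tau> (\<sigma> r) b + \<tau> (\<sigma> s') b)"
    using vf_add[OF s r s'] vf_add[OF t sr ss] by simp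
  show "vbracket \<sigma> \<tau> (\<lambda>b. r b + s' b) = (\<lambda>b. vbracket \<sigma> \<tau> r b + vbracket \<sigma> \<tau> s' b)"
    unfolding vbracket_def e3 e4 by (simp add: fun_eq_iff algebra_simps)
  have p1: "smooth_fn A U (\<lambda>b. r b * \<tau> s' b)" "smooth_fn A U (\<lambda>b. s' b * \<tau> r b)"
    "smooth_fn A U (\<lambda>b. r b * \<sigma> s' b)" "smooth_fn A U (\<lambda>b. s' b * \<sigma> r b)"
    using smooth_fn_mult[OF M] r s' tr ts sr ss by auto
  have e1: "\<sigma> (\<tau> (\<lambda>b. r b * s' b)) = (\<lambda>b. (r b * \<sigma> (\<tau> s') b + \<tau> s' b * \<sigma> r b) + (s' b * \<sigma> (\<tau> r) b + \<tau> r b * \<sigma> s' b))"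
    using vf_mult[OF t r s'] vf_add[OF s p1(1,2)] vf_mult[OF s r ts] vf_mult[OF s s' tr] by simp
  have e2: "\<tau> (\<sigma> (\<lambda>b. r b * s' b)) = (\<lambda>b. (r b * \<tau> (\<sigma> s') b + \<sigma> s' b * \<tau> r b) + (s' b * \<tau> (\<sigma> r) b + \<sigma> r b * \<tau> s' b))"
    using vf_mult[OF s r s'] vf_add[OF t p1(3,4)] vf_mult[OF t r ss] vf_mult[OF t s' sr] by simp
  show "vbracket \<sigma> \<tau> (\<lambda>b. r b * s' b) = (\<lambda>b. r b * vbracket \<sigma> \<tau> s' b + s' b * vbracket \<sigma> \<tau> r b)"
    unfolding vbracket_def e1 e2 by (simp add: fun_eq_iff algebra_simps)
next
  fix c r assume r: "smooth_fn A U r"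
  have tr: "smooth_fn A U (\<tau> r)" and sr: "smooth_fn A U (\<sigma> r)" using vf_smooth s t r by auto
  show "vbracket \<sigma> \<tau> (\<lambda>b. c * r b) = (\<lambda>b. c * vbracket \<sigma> \<tau> r b)"
  proof -
    have "\<sigma> (\<tau> (\<lambda>b. c * r b)) = (\<lambda>b. c * \<sigma> (\<tau> r) b)" using vf_smul[OF t r] vf_smul[OF s tr] by simp
    moreover have "\<tau> (\<sigma> (\<lambda>b. c * r b)) = (\<lambda>b. c * \<tau> (\<sigma> r) b)" using vf_smul[OF s r] vf_smul[OF t sr] by simp
    ultimately show ?thesis unfolding vbracket_def by (simp add: fun_eq_iff algebra_simps)
  qed
qed

lemma holo_zero: "holo_on A W (\<lambda>_. 0)"
  unfolding holo_on_def cx_holo_fun_def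
proof (intro ballI, clarify)
  fix V \<phi> x
  show "\<exists>D. (((\<lambda>_. 0::complex) \<circ> inv_into V \<phi>) has_derivative D) (at x) \<and> (\<forall>(c::complex) v. D (c *s v) = c * D v)"
    by (rule exI[of _ "\<lambda>_. 0"]) (simp add: o_def)
qed

lemma bracket_vf01:
  assumes M: "complex_manifold A" "open U" and s: "vf01 A U \<sigma>" and t: "vf01 A U \<tau>"
  shows "vf01 A U (vbracket \<sigma> \<tau>)"
proof -
  have vs: "vfield A U \<sigma>" using s unfolding vf01_def by (rule conjunct1)
  have vt: "vfield A U \<tau>" using t unfolding vf01_def by (rule conjunct1)
  show ?thesis unfolding vf01_def
  proof (intro conjI allI impI)
    show "vfield A U (vbracket \<sigma> \<tau>)" by (rule bracket_vfield[OF M vs vt])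
  next
    fix r b assume a: "smooth_fn A U r \<and> b \<in> U \<and>
        (\<exists>W h. open W \<and> b \<in> W \<and> W \<subseteq> U \<and> holo_on A W h \<and> (\<forall>x\<in>W. r x = h x))"
    then obtain W h where W: "open W" "b \<in> W" "W \<subseteq> U" "holo_on A W h" "\<forall>x\<in>W. r x = h x" by blast
    have r: "smooth_fn A U r" using a by auto
    have cl: "\<And>r b. smooth_fn A U r \<Longrightarrow> b \<in> U \<Longrightarrow>
        (\<exists>W h. open W \<and> b \<in> W \<and> W \<subseteq> U \<and> holo_on A W h \<and> (\<forall>x\<in>W. r x = h x))
        \<Longrightarrow> \<rho> r b = 0" if "vf01 A U \<rho>" for \<rho> using that unfolding vf01_def by blast
    have k: "\<rho> r x = 0" if "vf01 A U \<rho>" "x \<in> W" for \<rho> x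
      apply (rule cl[OF that(1) r])
      using that W apply blast
      using that W by blast
    have k2: "\<rho> (\<rho>' r) b = 0" if "vf01 A U \<rho>" "vf01 A U \<rho>'" for \<rho> \<rho>'
    proof -
      have "vfield A U \<rho>'" using that(2) unfolding vf01_def by (rule conjunct1)
      then have sm: "smooth_fn A U (\<rho>' r)" using r vf_smooth by blast
      have z: "\<forall>x\<in>W. \<rho>' r x = (\<lambda>_. 0) x" using k[OF that(2)] by auto
      have bU: "b \<in> U" using a by blast
      show ?thesis
        apply (rule cl[OF that(1) sm bU])
        apply (rule exI[of _ W], rule exI[of _ "\<lambda>_. 0"])
        using W holo_zero[of A W] z by blast
    qed
    show "vbracket \<sigma> \<tau> r b = 0" unfolding vbracket_def using k2[OF s t] k2[OF t s] by simp
  qed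
qed




lemma fibre_inst:
  assumes hf: "hilbert_field sc L ip" and sub: "BLS_subfield A sc L ip Sm dbar H"
  shows "fibre sc (L b) (ip b) (H b)"
proof -
  have vs: "vector_space sc" using hf unfolding hilbert_field_def by (rule conjunct1)
  have Lb: "0 \<in> L b \<and> (\<forall>x\<in>L b. \<forall>y\<in>L b. x + y \<in> L b) \<and> (\<forall>c. \<forall>x\<in>L b. sc c x \<in> L b) \<and>
        (\<forall>x\<in>L b. \<forall>y\<in>L b. \<forall>z\<in>L b. ip b (x + y) z = ip b x z + ip b y z) \<and>
        (\<forall>c. \<forall>x\<in>L b. \<forall>y\<in>L b. ip b (sc c x) y = c * ip b x y) \<and>
        (\<forall>x\<in>L b. \<forall>y\<in>L b. ip b y x = cnj (ip b x y)) \<and>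
        (\<forall>x\<in>L b. x \<noteq> 0 \<longrightarrow> Re (ip b x x) > 0) \<and>
        (\<forall>X. (\<forall>n. X n \<in> L b) \<and> (\<forall>e>0. \<exists>N. \<forall>m\<ge>N. \<forall>n\<ge>N. fnorm ip b (X m - X n) < e)
             \<longrightarrow> (\<exists>x\<in>L b. (\<lambda>n. fnorm ip b (X n - x)) \<longlonglongrightarrow> 0))"
    using hf unfolding hilbert_field_def by (rule conjunct2[THEN spec])
  have Hb: "H b \<subseteq> L b \<and> 0 \<in> H b \<and> (\<forall>x\<in>H b. \<forall>y\<in>H b. x + y \<in> H b) \<and>
        (\<forall>c. \<forall>x\<in>H b. sc c x \<in> H b) \<and>
        (\<forall>X x. (\<forall>n. X n \<in> H b) \<and> x \<in> L b \<and> (\<lambda>n. fnorm ip b (X n - x)) \<longlonglongrightarrow> 0 \<longrightarrow> x \<in> H b)"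
    using sub unfolding BLS_subfield_def by (rule conjunct1[THEN spec])
  note C1 = conjunct1 and C2 = conjunct2
  have l1: "0 \<in> L b" using Lb[THEN C1] .
  have l2: "\<forall>x\<in>L b. \<forall>y\<in>L b. x + y \<in> L b" using Lb[THEN C2, THEN C1] .
  have l3: "\<forall>c. \<forall>x\<in>L b. sc c x \<in> L b" using Lb[THEN C2, THEN C2, THEN C1] .
  have l4: "\<forall>x\<in>L b. \<forall>y\<in>L b. \<forall>z\<in>L b. ip b (x + y) z = ip b x z + ip b y z" using Lb[THEN C2, THEN C2, THEN C2, THEN C1] .
  have l5: "\<forall>c. \<forall>x\<in>L b. \<forall>y\<in>L b. ip b (sc c x) y = c * ip b x y" using Lb[THEN C2, THEN C2, THEN C2, THEN C2, THEN C1] .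
  have l6: "\<forall>x\<in>L b. \<forall>y\<in>L b. ip b y x = cnj (ip b x y)" using Lb[THEN C2, THEN C2, THEN C2, THEN C2, THEN C2, THEN C1] .
  have l7: "\<forall>x\<in>L b. x \<noteq> 0 \<longrightarrow> Re (ip b x x) > 0" using Lb[THEN C2, THEN C2, THEN C2, THEN C2, THEN C2, THEN C2, THEN C1] .
  have l8: "\<forall>X. (\<forall>n. X n \<in> L b) \<and> (\<forall>e>0. \<exists>N. \<forall>m\<ge>N. \<forall>n\<ge>N. fnorm ip b (X m - X n) < e)
             \<longrightarrow> (\<exists>x\<in>L b. (\<lambda>n. fnorm ip b (X n - x)) \<longlonglongrightarrow> 0)" using Lb[THEN C2, THEN C2, THEN C2, THEN C2, THEN C2, THEN C2, THEN C2] .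
  have h1: "H b \<subseteq> L b" using Hb[THEN C1] .
  have h2: "0 \<in> H b" using Hb[THEN C2, THEN C1] .
  have h3: "\<forall>x\<in>H b. \<forall>y\<in>H b. x + y \<in> H b" using Hb[THEN C2, THEN C2, THEN C1] .
  have h4: "\<forall>c. \<forall>x\<in>H b. sc c x \<in> H b" using Hb[THEN C2, THEN C2, THEN C2, THEN C1] .
  have h5: "\<forall>X x. (\<forall>n. X n \<in> H b) \<and> x \<in> L b \<and> (\<lambda>n. fnorm ip b (X n - x)) \<longlonglongrightarrow> 0 \<longrightarrow> x \<in> H b"
    using Hb[THEN C2, THEN C2, THEN C2, THEN C2] .
  show ?thesis
    unfolding fibre_def fibre_axioms_def
  proof (intro conjI vs allI impI)
    show "0 \<in> L b" by (rule l1)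
    show "\<And>x y. x \<in> L b \<Longrightarrow> y \<in> L b \<Longrightarrow> x + y \<in> L b" using l2 by blast
    show "\<And>x c. x \<in> L b \<Longrightarrow> sc c x \<in> L b" using l3 by blast
    show "\<And>x y z. x \<in> L b \<Longrightarrow> y \<in> L b \<Longrightarrow> z \<in> L b \<Longrightarrow> ip b (x + y) z = ip b x z + ip b y z" using l4 by blast
    show "\<And>x y c. x \<in> L b \<Longrightarrow> y \<in> L b \<Longrightarrow> ip b (sc c x) y = c * ip b x y" using l5 by blast
    show "\<And>x y. x \<in> L b \<Longrightarrow> y \<in> L b \<Longrightarrow> ip b y x = cnj (ip b x y)" using l6 by blast
    show "\<And>x. x \<in> L b \<Longrightarrow> x \<noteq> 0 \<Longrightarrow> 0 < Re (ip b x x)" using l7 by blast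
    show "\<And>X. \<forall>n. X n \<in> L b \<Longrightarrow> \<forall>e>0. \<exists>N. \<forall>m\<ge>N. \<forall>n\<ge>N. sqrt (Re (ip b (X m - X n) (X m - X n))) < e \<Longrightarrow>
         \<exists>x\<in>L b. (\<lambda>n. sqrt (Re (ip b (X n - x) (X n - x)))) \<longlonglongrightarrow> 0"
      using l8 unfolding fnorm_def by blast
    show "H b \<subseteq> L b" "0 \<in> H b" using h1 h2 by blast+
    show "\<And>x y. x \<in> H b \<Longrightarrow> y \<in> H b \<Longrightarrow> x + y \<in> H b" using h3 by blast
    show "\<And>x c. x \<in> H b \<Longrightarrow> sc c x \<in> H b" using h4 by blast
    show "\<And>X x. \<forall>n. X n \<in> H b \<Longrightarrow> x \<in> L b \<Longrightarrow> (\<lambda>n. sqrt (Re (ip b (X n - x) (X n - x)))) \<longlonglongrightarrow> 0 \<Longrightarrow> x \<in> H b"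
      using h5 unfolding fnorm_def by blast
  qed
qed


context
  fixes sc :: "complex \<Rightarrow> 'v::ab_group_add \<Rightarrow> 'v" and L H :: "'b \<Rightarrow> 'v set" and ip and b
  assumes fb: "fibre sc (L b) (ip b) (H b)"
begin

interpretation F: fibre sc "L b" "ip b" "H b" by (rule fb)

lemma projP: "proj ip H b x = F.P x" by (simp add: proj_def F.P_def)

lemma proj_H: "x \<in> L b \<Longrightarrow> proj ip H b x \<in> H b" using F.P_prop by (simp add: projP)
lemma proj_L: "x \<in> L b \<Longrightarrow> proj ip H b x \<in> L b" using F.PL by (simp add: projP)
lemma proj_id: "x \<in> H b \<Longrightarrow> proj ip H b x = x" using F.P_id by (simp add: projP)
lemma proj_left: "x \<in> L b \<Longrightarrow> z \<in> H b \<Longrightarrow> ip b (proj ip H b x) z = ip b x z"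
  using F.ip_P_left by (simp add: projP)
lemma proj_right: "x \<in> H b \<Longrightarrow> y \<in> L b \<Longrightarrow> ip b x (proj ip H b y) = ip b x y"
  using F.ip_P_right by (simp add: projP)
lemma proj_perp_ip: "x \<in> L b \<Longrightarrow> v \<in> L b \<Longrightarrow>
    ip b (x - proj ip H b x) v = ip b (proj_perp ip H b x) (proj_perp ip H b v)"
  using F.ip_perp by (simp add: projP proj_perp_def)
lemma HsubL: "x \<in> H b \<Longrightarrow> x \<in> L b" using F.HLm .
lemma L_zero: "0 \<in> L b" using F.L0 .
lemma H_zero: "0 \<in> H b" using F.H0 .
lemma ip_subl: "x\<in>L b \<Longrightarrow> y\<in>L b \<Longrightarrow> z\<in>L b \<Longrightarrow> ip b (x-y) z = ip b x z - ip b y z" using F.ipsubl .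
lemma ip_subr: "x\<in>L b \<Longrightarrow> y\<in>L b \<Longrightarrow> z\<in>L b \<Longrightarrow> ip b z (x-y) = ip b z x - ip b z y" using F.ipsubr .
lemma ip_0r: "z\<in>L b \<Longrightarrow> ip b z 0 = 0" using F.ip0r .
lemma L_sub: "x\<in>L b \<Longrightarrow> y\<in>L b \<Longrightarrow> x-y \<in> L b" using F.Lsub .
lemma ip_self0: "x\<in>L b \<Longrightarrow> ip b x x = 0 \<Longrightarrow> x = 0" using F.N0 by (simp add: F.N_def)

end




theorem proposition2p12:
  fixes A :: "('b::{t2_space,second_countable_topology} set \<times> ('b \<Rightarrow> complex^'n)) set"
    and sc :: "complex \<Rightarrow> 'v::ab_group_add \<Rightarrow> 'v"
    and L H :: "'b \<Rightarrow> 'v set"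
    and ip :: "'b \<Rightarrow> 'v \<Rightarrow> 'v \<Rightarrow> complex"
    and Sm :: "'b set \<Rightarrow> ('b \<Rightarrow> 'v) set"
    and nab dbar :: "('b,'v) conn"
  assumes "complex_manifold A"
    and "BLS_field A sc L ip Sm nab dbar"
    and "BLS_subfield A sc L ip Sm dbar H"
    and "integrable_acs A (SmSub Sm H) dbar"
  shows "(\<forall>U \<sigma> \<tau>. \<forall>f\<in>SmSub Sm H U. open U \<and> vf10 A U \<sigma> \<and> vf10 A U \<tau> \<longrightarrow>
            curv (induced_conn ip H nab) U \<sigma> \<tau> f = (\<lambda>b. 0) \<and>
            curv (induced_conn ip H nab) U (vconj \<sigma>) (vconj \<tau>) f = (\<lambda>b. 0)) \<and>
         (\<forall>U \<sigma> \<tau>. \<forall>f\<in>SmSub Sm H U. \<forall>g\<in>SmSub Sm H U. open U \<and> vf10 A U \<sigma> \<and> vf10 A U \<tau> \<longrightarrow>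
            (\<forall>b\<in>U. ip b (curv (induced_conn ip H nab) U \<sigma> (vconj \<tau>) f b) (g b) =
                    ip b (curv nab U \<sigma> (vconj \<tau>) f b) (g b)
                    - ip b (proj_perp ip H b (nab U \<sigma> f b)) (proj_perp ip H b (nab U \<tau> g b))))"
proof -
  note M = assms(1)
  note C1 = conjunct1 and C2 = conjunct2
  have shf: "smooth_hilbert_field A sc L ip Sm nab" using assms(2) unfolding BLS_field_def by (rule C1)
  have eqd_all: "\<forall>U \<sigma>. \<forall>f\<in>Sm U. open U \<and> vf01 A U \<sigma> \<longrightarrow> nab U \<sigma> f = dbar U \<sigma> f"
    using assms(2) unfolding BLS_field_def by (rule C2[THEN C2])
  have eqd: "\<And>U \<sigma> f. f \<in> Sm U \<Longrightarrow> open U \<Longrightarrow> vf01 A U \<sigma> \<Longrightarrow> nab U \<sigma> f = dbar U \<sigma> f"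
    by (rule eqd_all[rule_format]) auto
  have hf: "hilbert_field sc L ip" using shf unfolding smooth_hilbert_field_def by (rule C1)
  have ss: "smooth_structure A sc L ip Sm" using shf unfolding smooth_hilbert_field_def by (rule C2[THEN C1])
  have smet: "smooth_metric A ip Sm" using shf unfolding smooth_hilbert_field_def by (rule C2[THEN C2, THEN C1])
  have cn: "connection A sc Sm nab" using shf unfolding smooth_hilbert_field_def by (rule C2[THEN C2, THEN C2, THEN C1])
  have mcp: "metric_compatible A ip Sm nab" using shf unfolding smooth_hilbert_field_def by (rule C2[THEN C2, THEN C2, THEN C2])
  have fb: "\<And>b. fibre sc (L b) (ip b) (H b)" by (rule fibre_inst[OF hf assms(3)])
  note L_zero_i = L_zero[where sc=sc and L=L and ip=ip and H=H, OF fb]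
  note H_zero_i = H_zero[where sc=sc and L=L and ip=ip and H=H, OF fb]
  note proj_H_i = proj_H[where sc=sc and L=L and ip=ip and H=H, OF fb]
  note proj_L_i = proj_L[where sc=sc and L=L and ip=ip and H=H, OF fb]
  note proj_id_i = proj_id[where sc=sc and L=L and ip=ip and H=H, OF fb]
  note proj_left_i = proj_left[where sc=sc and L=L and ip=ip and H=H, OF fb]
  note proj_right_i = proj_right[where sc=sc and L=L and ip=ip and H=H, OF fb]
  note proj_perp_ip_i = proj_perp_ip[where sc=sc and L=L and ip=ip and H=H, OF fb]
  note HsubL_i = HsubL[where sc=sc and L=L and ip=ip and H=H, OF fb]
  note ip_subl_i = ip_subl[where sc=sc and L=L and ip=ip and H=H, OF fb]
  note ip_subr_i = ip_subr[where sc=sc and L=L and ip=ip and H=H, OF fb]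
  note ip_0r_i = ip_0r[where sc=sc and L=L and ip=ip and H=H, OF fb]
  note L_sub_i = L_sub[where sc=sc and L=L and ip=ip and H=H, OF fb]
  note ip_self0_i = ip_self0[where sc=sc and L=L and ip=ip and H=H, OF fb]
  have sec: "\<And>U f. open U \<Longrightarrow> f \<in> Sm U \<Longrightarrow> section_on L U f"
  proof -
    fix U f assume "open U" "f \<in> Sm U"
    moreover have "\<forall>U. open U \<longrightarrow> (\<forall>f\<in>Sm U. section_on L U f) \<and> (\<lambda>b. 0) \<in> Sm U \<and>
        (\<forall>f\<in>Sm U. \<forall>g\<in>Sm U. (\<lambda>b. f b + g b) \<in> Sm U) \<and>
        (\<forall>r. \<forall>f\<in>Sm U. smooth_fn A U r \<longrightarrow> fmult sc r f \<in> Sm U)"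
      using ss unfolding smooth_structure_def by (rule C1)
    ultimately show "section_on L U f" by blast
  qed
  have sec0: "\<And>U f b. open U \<Longrightarrow> f \<in> Sm U \<Longrightarrow> b \<notin> U \<Longrightarrow> f b = 0"
    using sec unfolding section_on_def by blast
  have secL: "\<And>U f b. open U \<Longrightarrow> f \<in> Sm U \<Longrightarrow> f b \<in> L b"
  proof -
    fix U f b assume a: "open U" "f \<in> Sm U"
    show "f b \<in> L b"
    proof (cases "b \<in> U")
      case True then show ?thesis using sec[OF a] unfolding section_on_def by blast
    next
      case False then show ?thesis using sec0[OF a False] L_zero_i by simp
    qed
  qed
  have nabSm: "\<And>U \<rho> f. open U \<Longrightarrow> vfield A U \<rho> \<Longrightarrow> f \<in> Sm U \<Longrightarrow> nab U \<rho> f \<in> Sm U"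
  proof -
    fix U \<rho> f assume a: "open U" "vfield A U \<rho>" "f \<in> Sm U"
    have "\<forall>\<sigma>. \<forall>f\<in>Sm U. vfield A U \<sigma> \<longrightarrow> nab U \<sigma> f \<in> Sm U"
      using cn[unfolded connection_def, THEN spec[of _ U], THEN mp[OF _ a(1)], THEN C1] .
    then show "nab U \<rho> f \<in> Sm U" using a by blast
  qed
  have compat: "\<And>U \<rho> f g. open U \<Longrightarrow> vfield A U \<rho> \<Longrightarrow> f \<in> Sm U \<Longrightarrow> g \<in> Sm U \<Longrightarrow>
      \<rho> (\<lambda>b. ip b (f b) (g b)) = (\<lambda>b. ip b (nab U \<rho> f b) (g b) + ip b (f b) (nab U (vconj \<rho>) g b))"
    by (rule mcp[unfolded metric_compatible_def, rule_format]) auto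
  have smf: "\<And>U f g. open U \<Longrightarrow> f \<in> Sm U \<Longrightarrow> g \<in> Sm U \<Longrightarrow> smooth_fn A U (\<lambda>b. ip b (f b) (g b))"
    by (rule smet[unfolded smooth_metric_def, rule_format]) auto
  have subD_all: "\<forall>U \<sigma>. \<forall>f\<in>SmSub Sm H U. open U \<and> vf01 A U \<sigma> \<longrightarrow> dbar U \<sigma> f \<in> SmSub Sm H U"
    using assms(3) unfolding BLS_subfield_def by (rule C2[THEN C2, THEN C1])
  have subD: "\<And>U \<rho> f. open U \<Longrightarrow> vf01 A U \<rho> \<Longrightarrow> f \<in> SmSub Sm H U \<Longrightarrow> dbar U \<rho> f \<in> SmSub Sm H U"
    by (rule subD_all[rule_format]) auto
  have projSm_all: "\<forall>U. \<forall>f\<in>Sm U. open U \<longrightarrow> (\<lambda>b. proj ip H b (f b)) \<in> Sm U"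
    using assms(3) unfolding BLS_subfield_def by (rule C2[THEN C2, THEN C2])
  have projSm: "\<And>U f. open U \<Longrightarrow> f \<in> Sm U \<Longrightarrow> (\<lambda>b. proj ip H b (f b)) \<in> Sm U"
    by (rule projSm_all[rule_format]) auto
  have integ: "\<And>U \<sigma> \<tau> f. open U \<Longrightarrow> vf01 A U \<sigma> \<Longrightarrow> vf01 A U \<tau> \<Longrightarrow> f \<in> SmSub Sm H U \<Longrightarrow>
     (\<lambda>b. dbar U \<sigma> (dbar U \<tau> f) b - dbar U \<tau> (dbar U \<sigma> f) b - dbar U (vbracket \<sigma> \<tau>) f b) = (\<lambda>b. 0)"
    by (rule assms(4)[unfolded integrable_acs_def, rule_format]) auto
  have Sub1: "\<And>U f. f \<in> SmSub Sm H U \<Longrightarrow> f \<in> Sm U" unfolding SmSub_def by blast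
  have SubI: "\<And>U f. f \<in> Sm U \<Longrightarrow> (\<And>b. f b \<in> H b) \<Longrightarrow> f \<in> SmSub Sm H U" unfolding SmSub_def by blast
  have SubH: "\<And>U f b. open U \<Longrightarrow> f \<in> SmSub Sm H U \<Longrightarrow> f b \<in> H b"
  proof -
    fix U f b assume a: "open U" "f \<in> SmSub Sm H U"
    show "f b \<in> H b"
    proof (cases "b \<in> U")
      case True then show ?thesis using a unfolding SmSub_def by blast
    next
      case False then show ?thesis using sec0[OF a(1) Sub1[OF a(2)] False] H_zero_i by simp
    qed
  qed
  have SubL: "\<And>U f b. open U \<Longrightarrow> f \<in> SmSub Sm H U \<Longrightarrow> f b \<in> L b"
    using SubH HsubL_i by blast
  have Sub0: "\<And>U f b. open U \<Longrightarrow> f \<in> SmSub Sm H U \<Longrightarrow> b \<notin> U \<Longrightarrow> f b = 0"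
    using sec0 Sub1 by blast
  define nH where "nH = induced_conn ip H nab"
  have nH_app: "\<And>U \<rho> f b. nH U \<rho> f b = proj ip H b (nab U \<rho> f b)"
    unfolding nH_def induced_conn_def by simp
  have nH_eq: "\<And>U \<rho> f. nH U \<rho> f = (\<lambda>b. proj ip H b (nab U \<rho> f b))"
    unfolding nH_def induced_conn_def by simp
  have nHSub: "\<And>U \<rho> f. open U \<Longrightarrow> vfield A U \<rho> \<Longrightarrow> f \<in> Sm U \<Longrightarrow> nH U \<rho> f \<in> SmSub Sm H U"
  proof -
    fix U \<rho> f assume a: "open U" "vfield A U \<rho>" "f \<in> Sm U"
    have n: "nab U \<rho> f \<in> Sm U" using nabSm a by blast
    show "nH U \<rho> f \<in> SmSub Sm H U"
      unfolding nH_eq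
      by (rule SubI[OF projSm[OF a(1) n]]) (rule proj_H_i[OF secL[OF a(1) n]])
  qed
  have lemA: "\<And>U \<rho> f. open U \<Longrightarrow> vf01 A U \<rho> \<Longrightarrow> f \<in> SmSub Sm H U \<Longrightarrow>
       nab U \<rho> f = dbar U \<rho> f \<and> nab U \<rho> f \<in> SmSub Sm H U \<and> nH U \<rho> f = nab U \<rho> f"
  proof -
    fix U \<rho> f assume a: "open U" "vf01 A U \<rho>" "f \<in> SmSub Sm H U"
    have e: "nab U \<rho> f = dbar U \<rho> f" using eqd[OF Sub1[OF a(3)] a(1,2)] .
    have s: "nab U \<rho> f \<in> SmSub Sm H U" using subD[OF a] e by simp
    have "nH U \<rho> f = nab U \<rho> f" unfolding nH_eq
      using proj_id_i[OF SubH[OF a(1) s]] by simp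
    then show "nab U \<rho> f = dbar U \<rho> f \<and> nab U \<rho> f \<in> SmSub Sm H U \<and> nH U \<rho> f = nab U \<rho> f"
      using e s by simp
  qed
  have compatH: "\<And>U \<rho> f g. open U \<Longrightarrow> vfield A U \<rho> \<Longrightarrow> f \<in> SmSub Sm H U \<Longrightarrow> g \<in> SmSub Sm H U \<Longrightarrow>
      \<rho> (\<lambda>b. ip b (f b) (g b)) = (\<lambda>b. ip b (nH U \<rho> f b) (g b) + ip b (f b) (nH U (vconj \<rho>) g b))"
  proof -
    fix U \<rho> f g assume a: "open U" "vfield A U \<rho>" "f \<in> SmSub Sm H U" "g \<in> SmSub Sm H U"
    have vc: "vfield A U (vconj \<rho>)" by (rule vconj_vfield[OF M a(1,2)])
    have "\<rho> (\<lambda>b. ip b (f b) (g b)) = (\<lambda>b. ip b (nab U \<rho> f b) (g b) + ip b (f b) (nab U (vconj \<rho>) g b))"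
      using compat[OF a(1,2) Sub1[OF a(3)] Sub1[OF a(4)]] .
    also have "\<dots> = (\<lambda>b. ip b (nH U \<rho> f b) (g b) + ip b (f b) (nH U (vconj \<rho>) g b))"
    proof (rule ext)
      fix b
      have l1: "nab U \<rho> f b \<in> L b" using secL[OF a(1) nabSm[OF a(1,2) Sub1[OF a(3)]]] .
      have l2: "nab U (vconj \<rho>) g b \<in> L b" using secL[OF a(1) nabSm[OF a(1) vc Sub1[OF a(4)]]] .
      show "ip b (nab U \<rho> f b) (g b) + ip b (f b) (nab U (vconj \<rho>) g b) =
            ip b (nH U \<rho> f b) (g b) + ip b (f b) (nH U (vconj \<rho>) g b)"
        unfolding nH_app using proj_left_i[OF l1 SubH[OF a(1,4)]] proj_right_i[OF SubH[OF a(1,3)] l2]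
        by simp
    qed
    finally show "\<rho> (\<lambda>b. ip b (f b) (g b)) = (\<lambda>b. ip b (nH U \<rho> f b) (g b) + ip b (f b) (nH U (vconj \<rho>) g b))" .
  qed
  have P1b: "\<And>U \<sigma> \<tau> f. open U \<Longrightarrow> vf10 A U \<sigma> \<Longrightarrow> vf10 A U \<tau> \<Longrightarrow> f \<in> SmSub Sm H U \<Longrightarrow>
      curv nH U (vconj \<sigma>) (vconj \<tau>) f = (\<lambda>b. 0)"
  proof -
    fix U \<sigma> \<tau> f assume a: "open U" "vf10 A U \<sigma>" "vf10 A U \<tau>" "f \<in> SmSub Sm H U"
    have s: "vf01 A U (vconj \<sigma>)" by (rule vconj_vf01[OF M a(1,2)])
    have t: "vf01 A U (vconj \<tau>)" by (rule vconj_vf01[OF M a(1,3)])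
    have br: "vf01 A U (vbracket (vconj \<sigma>) (vconj \<tau>))" by (rule bracket_vf01[OF M a(1) s t])
    have t1: "nH U (vconj \<tau>) f = dbar U (vconj \<tau>) f" "dbar U (vconj \<tau>) f \<in> SmSub Sm H U"
      using lemA[OF a(1) t a(4)] by auto
    have s1: "nH U (vconj \<sigma>) f = dbar U (vconj \<sigma>) f" "dbar U (vconj \<sigma>) f \<in> SmSub Sm H U"
      using lemA[OF a(1) s a(4)] by auto
    have st: "nH U (vconj \<sigma>) (dbar U (vconj \<tau>) f) = dbar U (vconj \<sigma>) (dbar U (vconj \<tau>) f)"
      using lemA[OF a(1) s t1(2)] by auto
    have ts: "nH U (vconj \<tau>) (dbar U (vconj \<sigma>) f) = dbar U (vconj \<tau>) (dbar U (vconj \<sigma>) f)"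
      using lemA[OF a(1) t s1(2)] by auto
    have bb: "nH U (vbracket (vconj \<sigma>) (vconj \<tau>)) f = dbar U (vbracket (vconj \<sigma>) (vconj \<tau>)) f"
      using lemA[OF a(1) br a(4)] by auto
    show "curv nH U (vconj \<sigma>) (vconj \<tau>) f = (\<lambda>b. 0)"
      unfolding curv_def t1(1) s1(1) st ts bb using integ[OF a(1) s t a(4)] .
  qed
  have skew: "\<And>U \<sigma> \<tau> f g b. open U \<Longrightarrow> vfield A U \<sigma> \<Longrightarrow> vfield A U \<tau> \<Longrightarrow>
      f \<in> SmSub Sm H U \<Longrightarrow> g \<in> SmSub Sm H U \<Longrightarrow>
      ip b (curv nH U \<sigma> \<tau> f b) (g b) + ip b (f b) (curv nH U (vconj \<sigma>) (vconj \<tau>) g b) = 0"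
  proof -
    fix U \<sigma> \<tau> f g b assume a: "open U" "vfield A U \<sigma>" "vfield A U \<tau>" "f \<in> SmSub Sm H U" "g \<in> SmSub Sm H U"
    have vs: "vfield A U (vconj \<sigma>)" by (rule vconj_vfield[OF M a(1,2)])
    have vt: "vfield A U (vconj \<tau>)" by (rule vconj_vfield[OF M a(1,3)])
    have vb: "vfield A U (vbracket \<sigma> \<tau>)" by (rule bracket_vfield[OF M a(1,2,3)])
    define F1 where "F1 = nH U \<tau> f"
    define F2 where "F2 = nH U \<sigma> f"
    define G1 where "G1 = nH U (vconj \<tau>) g"
    define G2 where "G2 = nH U (vconj \<sigma>) g"
    have F1s: "F1 \<in> SmSub Sm H U" unfolding F1_def by (rule nHSub[OF a(1,3) Sub1[OF a(4)]])
    have F2s: "F2 \<in> SmSub Sm H U" unfolding F2_def by (rule nHSub[OF a(1,2) Sub1[OF a(4)]])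
    have G1s: "G1 \<in> SmSub Sm H U" unfolding G1_def by (rule nHSub[OF a(1) vt Sub1[OF a(5)]])
    have G2s: "G2 \<in> SmSub Sm H U" unfolding G2_def by (rule nHSub[OF a(1) vs Sub1[OF a(5)]])
    have tP: "\<tau> (\<lambda>b. ip b (f b) (g b)) = (\<lambda>b. ip b (F1 b) (g b) + ip b (f b) (G1 b))"
      unfolding F1_def G1_def by (rule compatH[OF a(1,3,4,5)])
    have sP: "\<sigma> (\<lambda>b. ip b (f b) (g b)) = (\<lambda>b. ip b (F2 b) (g b) + ip b (f b) (G2 b))"
      unfolding F2_def G2_def by (rule compatH[OF a(1,2,4,5)])
    have m1: "smooth_fn A U (\<lambda>b. ip b (F1 b) (g b))" by (rule smf[OF a(1) Sub1[OF F1s] Sub1[OF a(5)]])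
    have m2: "smooth_fn A U (\<lambda>b. ip b (f b) (G1 b))" by (rule smf[OF a(1) Sub1[OF a(4)] Sub1[OF G1s]])
    have m3: "smooth_fn A U (\<lambda>b. ip b (F2 b) (g b))" by (rule smf[OF a(1) Sub1[OF F2s] Sub1[OF a(5)]])
    have m4: "smooth_fn A U (\<lambda>b. ip b (f b) (G2 b))" by (rule smf[OF a(1) Sub1[OF a(4)] Sub1[OF G2s]])
    have stP: "\<sigma> (\<tau> (\<lambda>b. ip b (f b) (g b))) = (\<lambda>b. (ip b (nH U \<sigma> F1 b) (g b) + ip b (F1 b) (G2 b))
         + (ip b (F2 b) (G1 b) + ip b (f b) (nH U (vconj \<sigma>) G1 b)))"
      unfolding tP vf_add[OF a(2) m1 m2] compatH[OF a(1,2) F1s a(5)] compatH[OF a(1,2) a(4) G1s]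
      unfolding F2_def G2_def ..
    have tsP: "\<tau> (\<sigma> (\<lambda>b. ip b (f b) (g b))) = (\<lambda>b. (ip b (nH U \<tau> F2 b) (g b) + ip b (F2 b) (G1 b))
         + (ip b (F1 b) (G2 b) + ip b (f b) (nH U (vconj \<tau>) G2 b)))"
      unfolding sP vf_add[OF a(3) m3 m4] compatH[OF a(1,3) F2s a(5)] compatH[OF a(1,3) a(4) G2s]
      unfolding F1_def G1_def ..
    have bP: "vbracket \<sigma> \<tau> (\<lambda>b. ip b (f b) (g b)) = (\<lambda>b. ip b (nH U (vbracket \<sigma> \<tau>) f b) (g b)
         + ip b (f b) (nH U (vbracket (vconj \<sigma>) (vconj \<tau>)) g b))"
      using compatH[OF a(1) vb a(4,5)] unfolding vconj_bracket .
    have E: "ip b (nH U (vbracket \<sigma> \<tau>) f b) (g b) + ip b (f b) (nH U (vbracket (vconj \<sigma>) (vconj \<tau>)) g b)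
        = ((ip b (nH U \<sigma> F1 b) (g b) + ip b (F1 b) (G2 b)) + (ip b (F2 b) (G1 b) + ip b (f b) (nH U (vconj \<sigma>) G1 b)))
        - ((ip b (nH U \<tau> F2 b) (g b) + ip b (F2 b) (G1 b)) + (ip b (F1 b) (G2 b) + ip b (f b) (nH U (vconj \<tau>) G2 b)))"
      using fun_cong[OF bP, of b] fun_cong[OF stP, of b] fun_cong[OF tsP, of b] unfolding vbracket_def by simp
    have L1: "nH U \<sigma> F1 b \<in> L b" by (rule SubL[OF a(1) nHSub[OF a(1,2) Sub1[OF F1s]]])
    have L2: "nH U \<tau> F2 b \<in> L b" by (rule SubL[OF a(1) nHSub[OF a(1,3) Sub1[OF F2s]]])
    have L3: "nH U (vbracket \<sigma> \<tau>) f b \<in> L b" by (rule SubL[OF a(1) nHSub[OF a(1) vb Sub1[OF a(4)]]])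
    have L4: "nH U (vconj \<sigma>) G1 b \<in> L b" by (rule SubL[OF a(1) nHSub[OF a(1) vs Sub1[OF G1s]]])
    have L5: "nH U (vconj \<tau>) G2 b \<in> L b" by (rule SubL[OF a(1) nHSub[OF a(1) vt Sub1[OF G2s]]])
    have vb': "vfield A U (vbracket (vconj \<sigma>) (vconj \<tau>))" by (rule bracket_vfield[OF M a(1) vs vt])
    have L6: "nH U (vbracket (vconj \<sigma>) (vconj \<tau>)) g b \<in> L b" by (rule SubL[OF a(1) nHSub[OF a(1) vb' Sub1[OF a(5)]]])
    have Lf: "f b \<in> L b" by (rule SubL[OF a(1,4)])
    have Lg: "g b \<in> L b" by (rule SubL[OF a(1,5)])
    have c1: "curv nH U \<sigma> \<tau> f b = nH U \<sigma> F1 b - nH U \<tau> F2 b - nH U (vbracket \<sigma> \<tau>) f b"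
      unfolding curv_def F1_def F2_def ..
    have c2: "curv nH U (vconj \<sigma>) (vconj \<tau>) g b = nH U (vconj \<sigma>) G1 b - nH U (vconj \<tau>) G2 b - nH U (vbracket (vconj \<sigma>) (vconj \<tau>)) g b"
      unfolding curv_def G1_def G2_def ..
    have i1: "ip b (curv nH U \<sigma> \<tau> f b) (g b) = ip b (nH U \<sigma> F1 b) (g b) - ip b (nH U \<tau> F2 b) (g b) - ip b (nH U (vbracket \<sigma> \<tau>) f b) (g b)"
      unfolding c1 using ip_subl_i[OF L_sub_i[OF L1 L2] L3 Lg] ip_subl_i[OF L1 L2 Lg] by simp
    have i2: "ip b (f b) (curv nH U (vconj \<sigma>) (vconj \<tau>) g b) = ip b (f b) (nH U (vconj \<sigma>) G1 b) - ip b (f b) (nH U (vconj \<tau>) G2 b) - ip b (f b) (nH U (vbracket (vconj \<sigma>) (vconj \<tau>)) g b)"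
      unfolding c2 using ip_subr_i[OF L_sub_i[OF L4 L5] L6 Lf] ip_subr_i[OF L4 L5 Lf] by simp
    show "ip b (curv nH U \<sigma> \<tau> f b) (g b) + ip b (f b) (curv nH U (vconj \<sigma>) (vconj \<tau>) g b) = 0"
      unfolding i1 i2 using E by (simp add: algebra_simps)
  qed
  have P1a: "\<And>U \<sigma> \<tau> f. open U \<Longrightarrow> vf10 A U \<sigma> \<Longrightarrow> vf10 A U \<tau> \<Longrightarrow> f \<in> SmSub Sm H U \<Longrightarrow>
      curv nH U \<sigma> \<tau> f = (\<lambda>b. 0)"
  proof -
    fix U \<sigma> \<tau> f assume a: "open U" "vf10 A U \<sigma>" "vf10 A U \<tau>" "f \<in> SmSub Sm H U"
    have vs: "vfield A U \<sigma>" using a(2) unfolding vf10_def by (rule C1)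
    have vt: "vfield A U \<tau>" using a(3) unfolding vf10_def by (rule C1)
    have vb: "vfield A U (vbracket \<sigma> \<tau>)" by (rule bracket_vfield[OF M a(1) vs vt])
    define a1 where "a1 = nH U \<sigma> (nH U \<tau> f)"
    define a2 where "a2 = nH U \<tau> (nH U \<sigma> f)"
    define a3 where "a3 = nH U (vbracket \<sigma> \<tau>) f"
    have s1: "a1 \<in> SmSub Sm H U" unfolding a1_def by (rule nHSub[OF a(1) vs Sub1[OF nHSub[OF a(1) vt Sub1[OF a(4)]]]])
    have s2: "a2 \<in> SmSub Sm H U" unfolding a2_def by (rule nHSub[OF a(1) vt Sub1[OF nHSub[OF a(1) vs Sub1[OF a(4)]]]])
    have s3: "a3 \<in> SmSub Sm H U" unfolding a3_def by (rule nHSub[OF a(1) vb Sub1[OF a(4)]])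
    have y: "curv nH U \<sigma> \<tau> f = (\<lambda>b. a1 b - a2 b - a3 b)" unfolding curv_def a1_def a2_def a3_def ..
    show "curv nH U \<sigma> \<tau> f = (\<lambda>b. 0)"
    proof (rule ext)
      fix b
      show "curv nH U \<sigma> \<tau> f b = 0"
      proof (cases "b \<in> U")
        case False
        then show ?thesis unfolding y using Sub0[OF a(1) s1 False] Sub0[OF a(1) s2 False] Sub0[OF a(1) s3 False] by simp
      next
        case True
        have orth: "ip b (curv nH U \<sigma> \<tau> f b) (c b) = 0" if c: "c \<in> SmSub Sm H U" for c
        proof -
          have "ip b (curv nH U \<sigma> \<tau> f b) (c b) + ip b (f b) (curv nH U (vconj \<sigma>) (vconj \<tau>) c b) = 0"
            by (rule skew[OF a(1) vs vt a(4) c])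
          moreover have "curv nH U (vconj \<sigma>) (vconj \<tau>) c b = 0" using P1b[OF a(1,2,3) c] by simp
          ultimately show ?thesis using ip_0r_i[OF SubL[OF a(1,4)]] by simp
        qed
        have La: "a1 b \<in> L b" "a2 b \<in> L b" "a3 b \<in> L b" using SubL[OF a(1)] s1 s2 s3 by auto
        have Ly: "curv nH U \<sigma> \<tau> f b \<in> L b" unfolding y using La L_sub_i by simp
        have "ip b (curv nH U \<sigma> \<tau> f b) (curv nH U \<sigma> \<tau> f b) =
              ip b (curv nH U \<sigma> \<tau> f b) (a1 b) - ip b (curv nH U \<sigma> \<tau> f b) (a2 b) - ip b (curv nH U \<sigma> \<tau> f b) (a3 b)"
          apply (subst (2) y)
          using ip_subr_i[OF L_sub_i[OF La(1,2)] La(3) Ly] ip_subr_i[OF La(1,2) Ly] by simp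
        also have "\<dots> = 0" using orth[OF s1] orth[OF s2] orth[OF s3] by simp
        finally show ?thesis using ip_self0_i[OF Ly] by simp
      qed
    qed
  qed
  have P2: "\<And>U \<sigma> \<tau> f g b. open U \<Longrightarrow> vf10 A U \<sigma> \<Longrightarrow> vf10 A U \<tau> \<Longrightarrow>
      f \<in> SmSub Sm H U \<Longrightarrow> g \<in> SmSub Sm H U \<Longrightarrow> b \<in> U \<Longrightarrow>
      ip b (curv nH U \<sigma> (vconj \<tau>) f b) (g b) = ip b (curv nab U \<sigma> (vconj \<tau>) f b) (g b)
                    - ip b (proj_perp ip H b (nab U \<sigma> f b)) (proj_perp ip H b (nab U \<tau> g b))"
  proof -
    fix U \<sigma> \<tau> f g b assume a: "open U" "vf10 A U \<sigma>" "vf10 A U \<tau>" "f \<in> SmSub Sm H U" "g \<in> SmSub Sm H U" "b \<in> U"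
    have vs: "vfield A U \<sigma>" using a(2) unfolding vf10_def by (rule C1)
    have vt: "vfield A U \<tau>" using a(3) unfolding vf10_def by (rule C1)
    have t': "vf01 A U (vconj \<tau>)" by (rule vconj_vf01[OF M a(1,3)])
    have vt': "vfield A U (vconj \<tau>)" using t' unfolding vf01_def by (rule C1)
    have vb: "vfield A U (vbracket \<sigma> (vconj \<tau>))" by (rule bracket_vfield[OF M a(1) vs vt'])
    define h1 where "h1 = nab U \<sigma> f"
    define h2 where "h2 = nH U \<sigma> f"
    have h1s: "h1 \<in> Sm U" unfolding h1_def by (rule nabSm[OF a(1) vs Sub1[OF a(4)]])
    have h2s: "h2 \<in> SmSub Sm H U" unfolding h2_def by (rule nHSub[OF a(1) vs Sub1[OF a(4)]])
    have h2e: "h2 = (\<lambda>b. proj ip H b (h1 b))" unfolding h1_def h2_def nH_eq ..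
    have A1: "nH U (vconj \<tau>) f = nab U (vconj \<tau>) f" "nab U (vconj \<tau>) f \<in> SmSub Sm H U"
      using lemA[OF a(1) t' a(4)] by auto
    have A2: "nH U (vconj \<tau>) h2 = nab U (vconj \<tau>) h2" using lemA[OF a(1) t' h2s] by auto
    have Lg: "g b \<in> L b" by (rule SubL[OF a(1,5)])
    have Hg: "g b \<in> H b" by (rule SubH[OF a(1,5)])
    have X1: "nab U \<sigma> (nab U (vconj \<tau>) f) b \<in> L b" by (rule secL[OF a(1) nabSm[OF a(1) vs Sub1[OF A1(2)]]])
    have X2: "nab U (vconj \<tau>) h2 b \<in> L b" by (rule secL[OF a(1) nabSm[OF a(1) vt' Sub1[OF h2s]]])
    have X3: "nab U (vbracket \<sigma> (vconj \<tau>)) f b \<in> L b" by (rule secL[OF a(1) nabSm[OF a(1) vb Sub1[OF a(4)]]])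
    have X4: "nab U (vconj \<tau>) h1 b \<in> L b" by (rule secL[OF a(1) nabSm[OF a(1) vt' h1s]])
    have lhs: "ip b (curv nH U \<sigma> (vconj \<tau>) f b) (g b) = ip b (nab U \<sigma> (nab U (vconj \<tau>) f) b) (g b)
        - ip b (nab U (vconj \<tau>) h2 b) (g b) - ip b (nab U (vbracket \<sigma> (vconj \<tau>)) f b) (g b)"
    proof -
      have "curv nH U \<sigma> (vconj \<tau>) f b = proj ip H b (nab U \<sigma> (nab U (vconj \<tau>) f) b) - nab U (vconj \<tau>) h2 b
          - proj ip H b (nab U (vbracket \<sigma> (vconj \<tau>)) f b)"
        unfolding curv_def A1(1) h2_def[symmetric] A2 nH_app ..
      then show ?thesis
        using ip_subl_i[OF L_sub_i[OF proj_L_i[OF X1] X2] proj_L_i[OF X3] Lg]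
          ip_subl_i[OF proj_L_i[OF X1] X2 Lg] proj_left_i[OF X1 Hg] proj_left_i[OF X3 Hg] by simp
    qed
    have rhs: "ip b (curv nab U \<sigma> (vconj \<tau>) f b) (g b) = ip b (nab U \<sigma> (nab U (vconj \<tau>) f) b) (g b)
        - ip b (nab U (vconj \<tau>) h1 b) (g b) - ip b (nab U (vbracket \<sigma> (vconj \<tau>)) f b) (g b)"
    proof -
      have "curv nab U \<sigma> (vconj \<tau>) f b = nab U \<sigma> (nab U (vconj \<tau>) f) b - nab U (vconj \<tau>) h1 b
          - nab U (vbracket \<sigma> (vconj \<tau>)) f b"
        unfolding curv_def h1_def ..
      then show ?thesis
        using ip_subl_i[OF L_sub_i[OF X1 X4] X3 Lg] ip_subl_i[OF X1 X4 Lg] by simp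
    qed
    have Pe: "(\<lambda>b. ip b (h1 b) (g b)) = (\<lambda>b. ip b (h2 b) (g b))"
    proof (rule ext)
      fix c
      show "ip c (h1 c) (g c) = ip c (h2 c) (g c)"
        unfolding h2e using proj_left_i[OF secL[OF a(1) h1s] SubH[OF a(1,5)]] by simp
    qed
    have k1: "vconj \<tau> (\<lambda>b. ip b (h1 b) (g b)) = (\<lambda>b. ip b (nab U (vconj \<tau>) h1 b) (g b) + ip b (h1 b) (nab U \<tau> g b))"
      using compat[OF a(1) vt' h1s Sub1[OF a(5)]] unfolding vconj_vconj .
    have k2: "vconj \<tau> (\<lambda>b. ip b (h2 b) (g b)) = (\<lambda>b. ip b (nab U (vconj \<tau>) h2 b) (g b) + ip b (h2 b) (nab U \<tau> g b))"
      using compat[OF a(1) vt' Sub1[OF h2s] Sub1[OF a(5)]] unfolding vconj_vconj .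
    have K: "ip b (nab U (vconj \<tau>) h1 b) (g b) + ip b (h1 b) (nab U \<tau> g b)
        = ip b (nab U (vconj \<tau>) h2 b) (g b) + ip b (h2 b) (nab U \<tau> g b)"
      using fun_cong[OF k1, of b] fun_cong[OF k2, of b] Pe by simp
    have Lh1: "h1 b \<in> L b" by (rule secL[OF a(1) h1s])
    have Lh2: "h2 b \<in> L b" by (rule SubL[OF a(1) h2s])
    have Lk: "nab U \<tau> g b \<in> L b" by (rule secL[OF a(1) nabSm[OF a(1) vt Sub1[OF a(5)]]])
    have "ip b (h1 b) (nab U \<tau> g b) - ip b (h2 b) (nab U \<tau> g b) = ip b (h1 b - h2 b) (nab U \<tau> g b)"
      using ip_subl_i[OF Lh1 Lh2 Lk] by simp
    also have "\<dots> = ip b (proj_perp ip H b (nab U \<sigma> f b)) (proj_perp ip H b (nab U \<tau> g b))"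
      using proj_perp_ip_i[OF Lh1 Lk] unfolding h2e h1_def by simp
    finally have Q: "ip b (h1 b) (nab U \<tau> g b) - ip b (h2 b) (nab U \<tau> g b) =
       ip b (proj_perp ip H b (nab U \<sigma> f b)) (proj_perp ip H b (nab U \<tau> g b))" .
    show "ip b (curv nH U \<sigma> (vconj \<tau>) f b) (g b) = ip b (curv nab U \<sigma> (vconj \<tau>) f b) (g b)
                    - ip b (proj_perp ip H b (nab U \<sigma> f b)) (proj_perp ip H b (nab U \<tau> g b))"
      unfolding lhs rhs Q[symmetric] using K by (simp add: algebra_simps)
  qed
  show ?thesis
    unfolding nH_def[symmetric]
  proof (intro conjI allI ballI impI)
    fix U \<sigma> \<tau> f assume f: "f \<in> SmSub Sm H U" and a: "open U \<and> vf10 A U \<sigma> \<and> vf10 A U \<tau>"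
    show "curv nH U \<sigma> \<tau> f = (\<lambda>b. 0)" using P1a a f by blast
    show "curv nH U (vconj \<sigma>) (vconj \<tau>) f = (\<lambda>b. 0)" using P1b a f by blast
  next
    fix U \<sigma> \<tau> f g b assume f: "f \<in> SmSub Sm H U" and g: "g \<in> SmSub Sm H U"
      and a: "open U \<and> vf10 A U \<sigma> \<and> vf10 A U \<tau>" and b: "b \<in> U"
    show "ip b (curv nH U \<sigma> (vconj \<tau>) f b) (g b) = ip b (curv nab U \<sigma> (vconj \<tau>) f b) (g b)
                    - ip b (proj_perp ip H b (nab U \<sigma> f b)) (proj_perp ip H b (nab U \<tau> g b))"
      using P2 a f g b by blast
  qed
qed


end
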